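(* Let $D>1$ be fixed, $0<\lambda<\lambda_D$, and let $\Gamma$ be a complete $D$-ary tree of depth $h$ with \[ h\le \underline h-\frac{\ln(\underline h)}{\ln(D)}+\frac{\ln(1-\frac1D)}{\ln(D)}. \] Then $\mathbb{E}_0(L^2)\to1$ as $n\to\infty$, where $L=\mathbb{P}_1(G)/\mathbb{P}_0(G)$.
   Context: Model: $\mathbb{P}_0$: $G\sim\mathcal G(n,\lambda/n)$; $\mathbb{P}_1$: $G=G_0\cup G'$ with $G_0\sim\mathcal G(n,\lambda/n)$ and $G'$ the image of $\Gamma$ under a uniformly random injection of its vertex set into $[n]$, independent of $G_0$; $\mathbb{E}_0$ is expectation under $\mathbb{P}_0$. A complete $D$-ary tree of depth $h$ has root at depth $0$, each vertex at depth $<h$ has $D$ children, and $K=(D^{h+1}-1)/(D-1)$ vertices. $\psi_D(\mu)=\mathbb{P}(\mathrm{Poi}(\mu)\ge D)$; $p_*(D,\lambda)$ is the largest nonnegative root of $p=\psi_D(\lambda p)$; $\lambda_D=\sup\{\lambda>0:p_*(D,\lambda)=0\}$. $p_h$ is the probability that a Galton–Watson tree with offspring $\mathrm{Poi}(\lambda)$ contains a complete $D$-ary tree of depth $h$ rooted at its root; $\underline h=\sup\{h>0:p_h>\ln(n)/n\}$. *)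

theory Defs
  imports "HOL-Probability.Probability" "HOL-Library.FuncSet"
begin

text \<open>psi_D(mu) = P(Poi(mu) >= D) = 1 - sum_{k<D} e^{-mu} mu^k / k!\<close>
definition psiD :: "nat \<Rightarrow> real \<Rightarrow> real" where
  "psiD D \<mu> = 1 - (\<Sum>k<D. exp (-\<mu>) * \<mu> ^ k / fact k)"

definition pstar :: "nat \<Rightarrow> real \<Rightarrow> real" where
  "pstar D lam = Sup {p. 0 \<le> p \<and> p = psiD D (lam * p)}"

definition lambdaD :: "nat \<Rightarrow> real" where
  "lambdaD D = Sup {lam. 0 < lam \<and> pstar D lam = 0}"

text \<open>p_h: probability that a Poisson(lambda) Galton-Watson tree contains a complete
  D-ary tree of depth h rooted at its root (recursive characterisation
  p_0 = 1, p_{h+1} = psi_D(lambda p_h)).\<close>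
fun ph :: "nat \<Rightarrow> real \<Rightarrow> nat \<Rightarrow> real" where
  "ph D lam 0 = 1"
| "ph D lam (Suc h) = psiD D (lam * ph D lam h)"

definition hbar :: "nat \<Rightarrow> real \<Rightarrow> nat \<Rightarrow> nat" where
  "hbar D lam n = Sup {h. 0 < h \<and> ph D lam h > ln (real n) / real n}"

text \<open>Graphs on vertex set [n] = {0..<n}: sets of edges, edges being 2-element sets.\<close>
definition pairs :: "nat \<Rightarrow> nat set set" where
  "pairs n = {e. \<exists>i j. i < n \<and> j < n \<and> i \<noteq> j \<and> e = {i, j}}"

definition treesize :: "nat \<Rightarrow> nat \<Rightarrow> nat" where
  "treesize D h = (D ^ (h + 1) - 1) div (D - 1)"

text \<open>Complete D-ary tree of depth h on vertices {0..<K} (heap labelling: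
  the parent of vertex j >= 1 is (j - 1) div D).\<close>
definition tree_edges :: "nat \<Rightarrow> nat \<Rightarrow> nat set set" where
  "tree_edges D h = {{(j - 1) div D, j} | j. 1 \<le> j \<and> j < treesize D h}"

definition P0 :: "real \<Rightarrow> nat \<Rightarrow> nat set set pmf" where
  "P0 lam n = map_pmf (\<lambda>f. {e \<in> pairs n. f e})
      (Pi_pmf (pairs n) False (\<lambda>_. bernoulli_pmf (lam / real n)))"

definition injections :: "nat \<Rightarrow> nat \<Rightarrow> (nat \<Rightarrow> nat) set" where
  "injections K n = {\<sigma>. \<sigma> \<in> {0..<K} \<rightarrow>\<^sub>E {0..<n} \<and> inj_on \<sigma> {0..<K}}"

definition P1 :: "nat \<Rightarrow> nat \<Rightarrow> real \<Rightarrow> nat \<Rightarrow> nat set set pmf" where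
  "P1 D h lam n =
     bind_pmf (P0 lam n) (\<lambda>G0.
       map_pmf (\<lambda>\<sigma>. G0 \<union> (\<lambda>e. \<sigma> ` e) ` tree_edges D h)
         (pmf_of_set (injections (treesize D h) n)))"

definition LR :: "nat \<Rightarrow> nat \<Rightarrow> real \<Rightarrow> nat \<Rightarrow> nat set set \<Rightarrow> real" where
  "LR D h lam n G = pmf (P1 D h lam n) G / pmf (P0 lam n) G"

definition second_moment :: "nat \<Rightarrow> nat \<Rightarrow> real \<Rightarrow> nat \<Rightarrow> real" where
  "second_moment D h lam n = measure_pmf.expectation (P0 lam n) (\<lambda>G. (LR D h lam n G)\<^sup>2)"

end

theory Submission
  imports Defs "HOL-Real_Asymp.Real_Asymp"
begin

lemma psiD_taylor:
  "\<exists>t. \<bar>t\<bar> \<le> \<bar>mu\<bar> \<and> psiD D mu = exp (t - mu) * mu ^ D / fact D"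
proof -
  obtain t where t: "\<bar>t\<bar> \<le> \<bar>mu\<bar>"
    "exp mu = (\<Sum>m<D. mu ^ m / fact m) + exp t / fact D * mu ^ D"
    using Maclaurin_exp_le[of mu D] by blast
  have "psiD D mu = exp (-mu) * (exp mu - (\<Sum>m<D. mu ^ m / fact m))"
    unfolding psiD_def by (simp add: sum_distrib_left right_diff_distrib exp_minus_inverse mult.commute)
  also have "\<dots> = exp (-mu) * (exp t / fact D * mu ^ D)"
    using t(2) by simp
  also have "\<dots> = (exp (-mu) * exp t) * mu ^ D / fact D" by simp
  also have "exp (-mu) * exp t = exp (t - mu)" by (simp add: mult_exp_exp)
  finally show ?thesis using t(1) by blast
qed

lemma psiD_nonneg: "0 \<le> mu \<Longrightarrow> 0 \<le> psiD D mu"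
  using psiD_taylor[of mu D] by auto

lemma psiD_pos: "0 < mu \<Longrightarrow> 0 < psiD D mu"
  using psiD_taylor[of mu D] by auto

lemma psiD_le_pow: assumes "0 \<le> mu" shows "psiD D mu \<le> mu ^ D / fact D"
proof -
  obtain t where t: "\<bar>t\<bar> \<le> \<bar>mu\<bar>" "psiD D mu = exp (t - mu) * mu ^ D / fact D"
    using psiD_taylor[of mu D] by blast
  have "exp (t - mu) \<le> 1" using t(1) assms by simp
  hence "exp (t - mu) * (mu ^ D / fact D) \<le> 1 * (mu ^ D / fact D)"
    by (intro mult_right_mono) (use assms in auto)
  thus ?thesis using t(2) by simp
qed

lemma psiD_le1: "0 \<le> mu \<Longrightarrow> psiD D mu \<le> 1"
proof -
  have "0 \<le> (\<Sum>k<D. exp (- mu) * mu ^ k / fact k)" if "0 \<le> mu"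
    using that by (intro sum_nonneg) simp
  thus "0 \<le> mu \<Longrightarrow> psiD D mu \<le> 1" unfolding psiD_def by simp
qed

lemma g_deriv:
  "((\<lambda>x. \<Sum>k<Suc m. exp (-x) * x ^ k / fact k) has_real_derivative
      (- exp (-x) * x ^ m / fact m)) (at x)"
proof (induction m)
  case 0
  show ?case by (auto intro!: derivative_eq_intros)
next
  case (Suc m)
  have d: "((\<lambda>x. exp (-x) * x ^ Suc m / fact (Suc m)) has_real_derivative
      (- exp (-x) * x ^ Suc m / fact (Suc m) + exp (-x) * x ^ m / fact m)) (at x)"
  proof -
    have e: "((\<lambda>x. exp (-x)) has_real_derivative -exp (-x)) (at x)"
      by (auto intro!: derivative_eq_intros)
    have "((\<lambda>x. exp (-x) * x ^ Suc m) has_real_derivative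
       (-exp (-x)) * x ^ Suc m + (real (Suc m) * x ^ (Suc m - 1)) * exp (-x)) (at x)"
      using DERIV_mult[OF e DERIV_pow[of "Suc m"]] by simp
    hence "((\<lambda>x. exp (-x) * x ^ Suc m / fact (Suc m)) has_real_derivative
       ((-exp (-x)) * x ^ Suc m + (real (Suc m) * x ^ (Suc m - 1)) * exp (-x)) / fact (Suc m)) (at x)"
      by (rule DERIV_cdivide)
    moreover have "((-exp (-x)) * x ^ Suc m + (real (Suc m) * x ^ (Suc m - 1)) * exp (-x)) / fact (Suc m)
       = - exp (-x) * x ^ Suc m / fact (Suc m) + exp (-x) * x ^ m / fact m"
      by (simp add: diff_divide_distrib fact_Suc)
    ultimately show ?thesis by simp
  qed
  have "((\<lambda>x. (\<Sum>k<Suc m. exp (-x) * x ^ k / fact k) + exp (-x) * x ^ Suc m / fact (Suc m))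
     has_real_derivative ((- exp (-x) * x ^ m / fact m) +
      (- exp (-x) * x ^ Suc m / fact (Suc m) + exp (-x) * x ^ m / fact m))) (at x)"
    by (rule DERIV_add[OF Suc.IH d])
  thus ?case by (simp add: algebra_simps)
qed

lemma psiD_mono: assumes "0 \<le> a" "a \<le> b" shows "psiD D a \<le> psiD D b"
proof (cases D)
  case 0 thus ?thesis by (simp add: psiD_def)
next
  case (Suc m)
  have "(\<lambda>x. \<Sum>k<Suc m. exp (-x) * x ^ k / fact k) b \<le> (\<lambda>x. \<Sum>k<Suc m. exp (-x) * x ^ k / fact k) a"
  proof (rule DERIV_nonpos_imp_nonincreasing[OF assms(2)])
    fix x assume "a \<le> x" "x \<le> b"
    hence "0 \<le> x" using assms by simp
    thus "\<exists>y. ((\<lambda>x. \<Sum>k<Suc m. exp (-x) * x ^ k / fact k) has_real_derivative y) (at x) \<and> y \<le> 0"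
      by (intro exI[of _ "- exp (-x) * x ^ m / fact m"] conjI g_deriv) auto
  qed
  thus ?thesis unfolding psiD_def Suc by simp
qed

lemma psiD_cont: "isCont (psiD D) x"
  unfolding psiD_def[abs_def] by (intro continuous_intros) simp

lemma ph_bounds: "0 \<le> lam \<Longrightarrow> 0 \<le> ph D lam h \<and> ph D lam h \<le> 1"
  by (induction h) (auto intro!: psiD_nonneg psiD_le1)

lemma ph_pos: "0 < lam \<Longrightarrow> 0 < ph D lam h"
  by (induction h) (auto intro!: psiD_pos)

lemma ph_mono_lam: "0 \<le> lam \<Longrightarrow> lam \<le> lam' \<Longrightarrow> ph D lam h \<le> ph D lam' h"
proof (induction h)
  case (Suc h)
  have "lam * ph D lam h \<le> lam' * ph D lam' h"
    using Suc ph_bounds[of lam D h] by (intro mult_mono) auto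
  thus ?case using Suc ph_bounds[of lam D h] by (auto intro!: psiD_mono)
qed simp

lemma ph_dec: "0 \<le> lam \<Longrightarrow> ph D lam (Suc h) \<le> ph D lam h"
proof (induction h)
  case 0 thus ?case by (simp add: psiD_le1)
next
  case (Suc h)
  have "lam * ph D lam (Suc h) \<le> lam * ph D lam h"
    using Suc by (intro mult_left_mono) auto
  thus ?case using Suc ph_bounds[of lam D "Suc h"]
    by (simp only: ph.simps) (intro psiD_mono, auto)
qed

lemma ph_step: "0 \<le> lam \<Longrightarrow> ph D lam (Suc h) \<le> (lam * ph D lam h) ^ D / fact D"
  using ph_bounds[of lam D h] by (auto intro!: psiD_le_pow)

lemma pstar1: assumes "D > 1" shows "pstar D 1 = 0"
proof -
  have "{p. 0 \<le> p \<and> p = psiD D (1 * p)} = {0}"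
  proof safe
    fix p :: real assume p: "0 \<le> p" "p = psiD D (1 * p)"
    show "p = 0"
    proof (rule ccontr)
      assume "p \<noteq> 0" hence pp: "0 < p" using p by simp
      have p1: "p \<le> 1" using p psiD_le1[of p D] by simp
      have "p \<le> p ^ D / fact D" using p psiD_le_pow[of p D] by simp
      also have "p ^ D \<le> p ^ 2" using assms p1 pp by (intro power_decreasing) auto
      hence "p ^ D / fact D \<le> p ^ 2 / fact D" by (simp add: divide_right_mono)
      also have "fact D \<ge> (fact 2 :: real)" using assms by (intro fact_mono) auto
      hence "p ^ 2 / fact D \<le> p ^ 2 / 2"
        by (intro divide_left_mono) (auto simp: numeral_2_eq_2)
      also have "p ^ 2 / 2 < p"
      proof -
        have "p * p \<le> p * 1" using pp p1 by (intro mult_left_mono) auto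
        thus ?thesis using pp by (simp add: power2_eq_square)
      qed
      finally show False by simp
    qed
  next
    have "(0::real) ^ D / fact D = 0" using assms by simp
    moreover have "psiD D 0 \<le> 0 ^ D / fact D" by (rule psiD_le_pow) simp
    ultimately have "psiD D 0 = 0" using psiD_nonneg[of 0 D] by linarith
    thus "0 = psiD D (1 * 0)" by simp
  qed
  thus ?thesis unfolding pstar_def by simp
qed

lemma lam_exists:
  assumes "D > 1" "lam < lambdaD D"
  shows "\<exists>l. lam < l \<and> 0 < l \<and> pstar D l = 0"
proof -
  let ?S = "{l. 0 < l \<and> pstar D l = 0}"
  have "1 \<in> ?S" using pstar1[OF assms(1)] by simp
  show ?thesis
  proof (cases "bdd_above ?S")
    case True
    then obtain x where "x \<in> ?S" "lam < x"
      using less_cSup_iff[of ?S lam] assms(2) \<open>1 \<in> ?S\<close> unfolding lambdaD_def by blast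
    thus ?thesis by blast
  next
    case False
    then obtain x where "x \<in> ?S" "lam < x" unfolding bdd_above_def by (meson not_le)
    thus ?thesis by blast
  qed
qed

lemma ph_to0_pstar:
  assumes "0 < l" "pstar D l = 0"
  shows "ph D l \<longlonglongrightarrow> 0"
proof -
  have dec: "decseq (ph D l)" using ph_dec[of l D] assms by (intro decseq_SucI) auto
  obtain L where L: "ph D l \<longlonglongrightarrow> L" "\<forall>i. L \<le> ph D l i"
    using decseq_convergent[OF dec, of 0] ph_bounds[of l D] assms by auto
  have L0: "0 \<le> L" using L(1) ph_bounds[of l D] assms
    by (intro LIMSEQ_le_const) auto
  have "(\<lambda>h. ph D l (Suc h)) \<longlonglongrightarrow> L" using L(1) by (rule LIMSEQ_Suc)
  moreover have "(\<lambda>h. ph D l (Suc h)) \<longlonglongrightarrow> psiD D (l * L)"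
    unfolding ph.simps
    by (rule isCont_tendsto_compose[OF psiD_cont]) (intro tendsto_intros L(1))
  ultimately have eq: "L = psiD D (l * L)" using LIMSEQ_unique by blast
  have "L \<le> pstar D l" unfolding pstar_def
  proof (rule cSup_upper)
    show "L \<in> {p. 0 \<le> p \<and> p = psiD D (l * p)}" using eq L0 by simp
    show "bdd_above {p. 0 \<le> p \<and> p = psiD D (l * p)}"
    proof (rule bdd_aboveI[of _ 1])
      fix x assume "x \<in> {p. 0 \<le> p \<and> p = psiD D (l * p)}"
      hence "x = psiD D (l * x)" "0 \<le> l * x" using assms by auto
      thus "x \<le> 1" using psiD_le1[of "l * x" D] by simp
    qed
  qed
  hence "L = 0" using L0 assms by simp
  thus ?thesis using L by simp
qed

lemma ph_to0:
  assumes "D > 1" "0 < lam" "lam < lambdaD D"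
  shows "ph D lam \<longlonglongrightarrow> 0"
proof -
  obtain l where l: "lam < l" "0 < l" "pstar D l = 0" using lam_exists assms by blast
  have lim: "ph D l \<longlonglongrightarrow> 0" using ph_to0_pstar l by simp
  show ?thesis
  proof (rule tendsto_sandwich[of "\<lambda>_. 0" _ _ "ph D l"])
    show "\<forall>\<^sub>F n in sequentially. 0 \<le> ph D lam n" using ph_bounds assms by (auto intro!: always_eventually)
    show "\<forall>\<^sub>F n in sequentially. ph D lam n \<le> ph D l n" using ph_mono_lam assms l by (auto intro!: always_eventually)
  qed (use lim in auto)
qed


lemma ln_ev1: "\<forall>\<^sub>F n in sequentially. 1 \<le> ln (real n)"
  by real_asymp

lemma lnn_to0: "(\<lambda>n. ln (real n) / real n) \<longlonglongrightarrow> 0"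
  by real_asymp

context
  fixes D :: nat and lam :: real
  assumes D1: "D > 1" and lam0: "0 < lam" and lamD: "lam < lambdaD D"
begin

abbreviation "q \<equiv> ph D lam"
abbreviation "AS n \<equiv> {h. 0 < h \<and> ph D lam h > ln (real n) / real n}"

lemma q_to0: "q \<longlonglongrightarrow> 0" using ph_to0 D1 lam0 lamD by blast

lemma AS_finite:
  assumes "1 \<le> ln (real n)" shows "finite (AS n)"
proof -
  have "real n > 0" using assms by (cases "n = 0") auto
  moreover have "0 < ln (real n)" using assms by linarith
  ultimately have "0 < ln (real n) / real n" by (intro divide_pos_pos)
  hence "\<forall>\<^sub>F h in sequentially. q h < ln (real n) / real n"
    using order_tendstoD(2)[OF q_to0] by blast
  then obtain H where H: "\<And>h. h \<ge> H \<Longrightarrow> q h < ln (real n) / real n"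
    unfolding eventually_sequentially by blast
  have "AS n \<subseteq> {..<H}"
  proof
    fix x assume x: "x \<in> AS n"
    show "x \<in> {..<H}"
    proof (rule ccontr)
      assume "x \<notin> {..<H}" hence "x \<ge> H" by simp
      thus False using H[of x] x by simp
    qed
  qed
  thus ?thesis using finite_subset by blast
qed

lemma hbar_ge:
  assumes "1 \<le> ln (real n)" "0 < H" "q H > ln (real n) / real n"
  shows "H \<le> hbar D lam n"
  unfolding hbar_def by (rule le_cSup_finite[OF AS_finite[OF assms(1)]]) (use assms in auto)

lemma hbar_in:
  assumes "1 \<le> ln (real n)" "q 1 > ln (real n) / real n"
  shows "hbar D lam n \<in> AS n"
proof -
  have "AS n \<noteq> {}" using assms by auto
  thus ?thesis unfolding hbar_def using AS_finite[OF assms(1)] cSup_eq_Max Max_in by metis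
qed

lemma ev_q_gt: "\<forall>\<^sub>F n in sequentially. ln (real n) / real n < q H"
  using order_tendstoD(2)[OF lnn_to0, of "q H"] ph_pos[OF lam0] by blast

lemma hbar_inf: "filterlim (hbar D lam) at_top sequentially"
  unfolding filterlim_at_top
proof
  fix Z :: nat
  show "\<forall>\<^sub>F n in sequentially. Z \<le> hbar D lam n"
    using ev_q_gt[of "max 1 Z"] ln_ev1
  proof eventually_elim
    case (elim n)
    thus ?case using hbar_ge[of n "max 1 Z"] by auto
  qed
qed

lemma ev_hbar_in: "\<forall>\<^sub>F n in sequentially. hbar D lam n \<in> AS n"
  using ev_q_gt[of 1] ln_ev1
proof eventually_elim
  case (elim n) show ?case by (rule hbar_in[OF elim(2) elim(1)])
qed

definition "cc = lam ^ D / fact D"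
definition "w h = cc * q h ^ (D - 1)"

lemma cc_pos: "0 < cc" unfolding cc_def using lam0 by simp

lemma w_nonneg: "0 \<le> w h" unfolding w_def using cc_pos ph_bounds[of lam D h] lam0 by simp

lemma q_step: "q (Suc h) \<le> cc * q h ^ D"
  using ph_step[of lam D h] lam0 unfolding cc_def by (simp add: power_mult_distrib)

lemma w_step: "w (Suc h) \<le> w h ^ D"
proof -
  have "q (Suc h) ^ (D - 1) \<le> (cc * q h ^ D) ^ (D - 1)"
    using q_step ph_bounds[of lam D "Suc h"] lam0 by (intro power_mono) auto
  hence "w (Suc h) \<le> cc * (cc * q h ^ D) ^ (D - 1)"
    unfolding w_def using cc_pos by (intro mult_left_mono) auto
  also have "\<dots> = cc ^ (Suc (D - 1)) * q h ^ (D * (D - 1))"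
    by (simp add: power_mult_distrib power_mult)
  also have "\<dots> = w h ^ D" unfolding w_def using D1
    by (simp add: power_mult_distrib power_mult[symmetric] mult.commute)
  finally show ?thesis .
qed

lemma w_to0: "w \<longlonglongrightarrow> 0"
proof -
  have lim: "(\<lambda>h. cc * q h ^ (D - 1)) \<longlonglongrightarrow> cc * 0 ^ (D - 1)"
    by (intro tendsto_intros q_to0)
  have eq: "cc * (0::real) ^ (D - 1) = 0" using D1 by simp
  show ?thesis using lim[unfolded eq] unfolding w_def .
qed

lemma w_decay:
  obtains h0 where "\<And>k. w (h0 + k) \<le> exp (- (real D ^ k))"
proof -
  have "\<forall>\<^sub>F h in sequentially. w h < exp (-1)"
    using order_tendstoD(2)[OF w_to0, of "exp (-1)"] by simp
  then obtain h0 where h0: "w h0 < exp (-1)" unfolding eventually_sequentially by blast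
  have "w (h0 + k) \<le> exp (- (real D ^ k))" for k
  proof (induction k)
    case 0 thus ?case using h0 by simp
  next
    case (Suc k)
    have "w (h0 + Suc k) \<le> w (h0 + k) ^ D" using w_step[of "h0 + k"] by simp
    also have "\<dots> \<le> exp (- (real D ^ k)) ^ D"
      using Suc w_nonneg by (intro power_mono) auto
    also have "\<dots> = exp (- (real D ^ Suc k))"
      by (simp add: exp_of_nat_mult[symmetric] mult.commute)
    finally show ?case .
  qed
  thus ?thesis using that by blast
qed

lemma hbar_bound: "\<exists>C>0. \<forall>\<^sub>F n in sequentially. real D ^ hbar D lam n \<le> C * ln (real n)"
proof -
  obtain h0 where h0: "\<And>k. w (h0 + k) \<le> exp (- (real D ^ k))" using w_decay by blast
  define C where "C = real D ^ h0 * (real D - 1 + \<bar>ln cc\<bar>)"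
  have D1r: "real D - 1 \<ge> 1" using D1 by simp
  have Cpos: "C > 0" unfolding C_def using D1 by (intro mult_pos_pos) auto
  have "\<forall>\<^sub>F n in sequentially. real D ^ hbar D lam n \<le> C * ln (real n)"
    using ev_hbar_in ln_ev1
  proof eventually_elim
    case (elim n)
    define hb where "hb = hbar D lam n"
    have qhb: "q hb > ln (real n) / real n" using elim hb_def by auto
    have n0: "real n > 0" using elim(2) by (cases "n = 0") auto
    have "1 / real n \<le> ln (real n) / real n" using elim(2) n0 by (intro divide_right_mono) auto
    hence qhb1: "q hb > 1 / real n" using qhb by linarith
    show ?case
    proof (cases "hb \<ge> h0")
      case False
      have "real D ^ hb \<le> real D ^ h0" using False D1 by (intro power_increasing) auto
      also have "\<dots> \<le> real D ^ h0 * ((real D - 1 + \<bar>ln cc\<bar>) * ln (real n))"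
      proof -
        have "1 * 1 \<le> (real D - 1 + \<bar>ln cc\<bar>) * ln (real n)"
          using D1r elim(2) by (intro mult_mono) auto
        hence "real D ^ h0 * 1 \<le> real D ^ h0 * ((real D - 1 + \<bar>ln cc\<bar>) * ln (real n))"
          by (intro mult_left_mono) auto
        thus ?thesis by simp
      qed
      finally show ?thesis unfolding C_def hb_def by (simp add: mult.assoc)
    next
      case True
      define k where "k = hb - h0"
      have hbk: "hb = h0 + k" using True k_def by simp
      have "cc * (1 / real n) ^ (D - 1) < cc * q hb ^ (D - 1)"
        using qhb1 cc_pos D1 n0 by (intro mult_strict_left_mono power_strict_mono) auto
      also have "\<dots> = w hb" unfolding w_def by simp
      also have "\<dots> \<le> exp (- (real D ^ k))" using h0 hbk by simp
      finally have lt: "cc * (1 / real n) ^ (D - 1) < exp (- (real D ^ k))" .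
      have "ln (cc * (1 / real n) ^ (D - 1)) < ln (exp (- (real D ^ k)))"
        using lt cc_pos n0 by (subst ln_less_cancel_iff) auto
      hence "ln (cc * (1 / real n) ^ (D - 1)) < - (real D ^ k)" by simp
      also have "ln (cc * (1 / real n) ^ (D - 1)) = ln cc - real (D - 1) * ln (real n)"
        using cc_pos n0 by (simp add: ln_mult ln_realpow ln_div)
      finally have "real D ^ k < real (D - 1) * ln (real n) - ln cc" by simp
      also have "\<dots> \<le> (real D - 1 + \<bar>ln cc\<bar>) * ln (real n)"
      proof -
        have e1: "real (D - 1) = real D - 1" using D1 by (simp add: of_nat_diff)
        have e2: "\<bar>ln cc\<bar> * 1 \<le> \<bar>ln cc\<bar> * ln (real n)" using elim(2) by (intro mult_left_mono) auto
        have e3: "(real D - 1 + \<bar>ln cc\<bar>) * ln (real n) = (real D - 1) * ln (real n) + \<bar>ln cc\<bar> * ln (real n)"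
          by (simp add: distrib_right)
        show ?thesis unfolding e1 e3 using e2 by linarith
      qed
      finally have "real D ^ k \<le> (real D - 1 + \<bar>ln cc\<bar>) * ln (real n)" by simp
      hence "real D ^ h0 * real D ^ k \<le> real D ^ h0 * ((real D - 1 + \<bar>ln cc\<bar>) * ln (real n))"
        by (intro mult_left_mono) auto
      thus ?thesis unfolding C_def hb_def[symmetric] hbk by (simp add: power_add mult.assoc)
    qed
  qed
  thus ?thesis using Cpos by blast
qed

end

lemma K_small:
  fixes D :: nat and lam :: real and hs :: "nat \<Rightarrow> nat"
  assumes D1: "D > 1"
    and lam0: "0 < lam" and lamD: "lam < lambdaD D"
    and hyp: "\<forall>\<^sub>F n in sequentially.
           real (hs n) \<le> real (hbar D lam n) - ln (real (hbar D lam n)) / ln (real D)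
                          + ln (1 - 1 / real D) / ln (real D)"
    and eps: "0 < \<epsilon>"
  shows "\<forall>\<^sub>F n in sequentially. real (treesize D (hs n)) \<le> \<epsilon> * ln (real n)"
proof -
  obtain C where C: "C > 0" "\<forall>\<^sub>F n in sequentially. real D ^ hbar D lam n \<le> C * ln (real n)"
    using hbar_bound[OF D1 lam0 lamD] by blast
  define N where "N = nat \<lceil>real D * C / \<epsilon>\<rceil> + 1"
  have "\<forall>\<^sub>F n in sequentially. N \<le> hbar D lam n"
    using hbar_inf[OF D1 lam0 lamD] unfolding filterlim_at_top by blast
  with C(2) hyp ln_ev1 show ?thesis
  proof eventually_elim
    case (elim n)
    define hb where "hb = hbar D lam n"
    have hbN: "N \<le> hb" using elim hb_def by simp
    have hb1: "real hb \<ge> 1" using hbN unfolding N_def by simp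
    have "nat \<lceil>real D * C / \<epsilon>\<rceil> \<le> hb" using hbN unfolding N_def by linarith
    hence "real (nat \<lceil>real D * C / \<epsilon>\<rceil>) \<le> real hb" by (simp only: of_nat_le_iff)
    moreover have "real D * C / \<epsilon> \<le> real (nat \<lceil>real D * C / \<epsilon>\<rceil>)" by (rule real_nat_ceiling_ge)
    ultimately have hbge: "real hb \<ge> real D * C / \<epsilon>" by linarith
    have lnD: "ln (real D) > 0" using D1 by simp
    have l1: "ln (1 - 1 / real D) \<le> 0" using D1 by (subst ln_le_zero_iff) auto
    have "ln (1 - 1 / real D) / ln (real D) \<le> 0" using l1 lnD by (rule divide_nonpos_pos)
    hence "real (hs n) \<le> real hb - ln (real hb) / ln (real D)"
      using elim(2) unfolding hb_def by linarith
    hence "real D powr real (hs n) \<le> real D powr (real hb - ln (real hb) / ln (real D))"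
      using D1 by (intro powr_mono) auto
    also have "\<dots> = real D powr real hb / real D powr (ln (real hb) / ln (real D))"
      using D1 by (simp add: powr_diff)
    also have "real D powr (ln (real hb) / ln (real D)) = real hb"
      using D1 hb1 lnD by (simp add: powr_def)
    finally have "real D ^ hs n \<le> real D ^ hb / real hb"
      using D1 by (simp add: powr_realpow)
    also have "\<dots> \<le> C * ln (real n) / real hb"
      using elim(1) hb_def hb1 by (intro divide_right_mono) auto
    finally have A: "real D ^ hs n \<le> C * ln (real n) / real hb" .
    have "real (treesize D (hs n)) \<le> real (D ^ (hs n + 1))"
      unfolding treesize_def by (simp only: of_nat_le_iff) (meson diff_le_self div_le_dividend le_trans)
    also have "\<dots> = real D * real D ^ hs n" by simp
    also have "\<dots> \<le> real D * (C * ln (real n) / real hb)" using A by (intro mult_left_mono) auto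
    also have "\<dots> = (real D * C / real hb) * ln (real n)" by simp
    also have "real D * C / real hb \<le> \<epsilon>"
      using hbge hb1 eps by (simp add: divide_le_eq mult.commute pos_divide_le_eq)
    hence "(real D * C / real hb) * ln (real n) \<le> \<epsilon> * ln (real n)"
      using elim(3) by (intro mult_right_mono) auto
    finally show ?case .
  qed
qed


definition imgE :: "(nat \<Rightarrow> nat) \<Rightarrow> nat set set \<Rightarrow> nat set set" where
  "imgE \<sigma> B = (\<lambda>e. \<sigma> ` e) ` B"

lemma finite_pairs: "finite (pairs n)"
proof -
  have "pairs n \<subseteq> Pow {0..<n}" unfolding pairs_def by auto
  thus ?thesis by (rule finite_subset) simp
qed

lemma sum_binom1:
  fixes p :: real
  assumes "finite S"
  shows "(\<Sum>A\<in>Pow S. p ^ card A * (1 - p) ^ card (S - A)) = 1"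
  using prod_add[OF assms, of "\<lambda>_. p" "\<lambda>_. 1 - p"] by simp

lemma sum_pow_Pow:
  fixes a :: real
  assumes "finite S"
  shows "(\<Sum>A\<in>Pow S. a ^ card A) = (1 + a) ^ card S"
  using prod_add[OF assms, of "\<lambda>_. a" "\<lambda>_. 1"] by (simp add: add.commute)

lemma sum_supersets:
  fixes p :: real
  assumes N: "finite N" and U: "U \<subseteq> N"
  shows "(\<Sum>G\<in>{G\<in>Pow N. U \<subseteq> G}. p ^ card G * (1 - p) ^ card (N - G)) = p ^ card U"
proof -
  have fU: "finite U" using U N finite_subset by blast
  have img: "{G\<in>Pow N. U \<subseteq> G} = (\<lambda>A. U \<union> A) ` Pow (N - U)"
  proof (intro equalityI subsetI)
    fix G assume "G \<in> {G\<in>Pow N. U \<subseteq> G}"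
    hence "G = U \<union> (G - U)" "G - U \<in> Pow (N - U)" by auto
    thus "G \<in> (\<lambda>A. U \<union> A) ` Pow (N - U)" by blast
  qed (use U in auto)
  have inj: "inj_on (\<lambda>A. U \<union> A) (Pow (N - U))"
    by (rule inj_onI) blast
  have "(\<Sum>G\<in>{G\<in>Pow N. U \<subseteq> G}. p ^ card G * (1 - p) ^ card (N - G))
      = (\<Sum>A\<in>Pow (N - U). p ^ card (U \<union> A) * (1 - p) ^ card (N - (U \<union> A)))"
    unfolding img by (subst sum.reindex[OF inj]) simp
  also have "\<dots> = (\<Sum>A\<in>Pow (N - U). p ^ card U * (p ^ card A * (1 - p) ^ card ((N - U) - A)))"
  proof (rule sum.cong[OF refl])
    fix A assume A: "A \<in> Pow (N - U)"
    have fA: "finite A" using A N finite_subset by auto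
    have "card (U \<union> A) = card U + card A" using A fU fA by (intro card_Un_disjoint) auto
    moreover have "N - (U \<union> A) = (N - U) - A" by auto
    ultimately show "p ^ card (U \<union> A) * (1 - p) ^ card (N - (U \<union> A))
        = p ^ card U * (p ^ card A * (1 - p) ^ card ((N - U) - A))" by (simp add: power_add)
  qed
  also have "\<dots> = p ^ card U" using sum_binom1[of "N - U" p] N
    by (simp add: sum_distrib_left[symmetric])
  finally show ?thesis .
qed

lemma sum_unions:
  fixes p :: real
  assumes N: "finite N" and SG: "S \<subseteq> G" and GN: "G \<subseteq> N"
  shows "(\<Sum>G0\<in>{G0\<in>Pow N. G0 \<union> S = G}. p ^ card G0 * (1 - p) ^ card (N - G0))
      = p ^ (card G - card S) * (1 - p) ^ card (N - G)"
proof -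
  have fG: "finite G" using GN N finite_subset by blast
  have fS: "finite S" using SG fG finite_subset by blast
  have img: "{G0\<in>Pow N. G0 \<union> S = G} = (\<lambda>A. (G - S) \<union> A) ` Pow S"
  proof (intro equalityI subsetI)
    fix G0 assume "G0 \<in> {G0\<in>Pow N. G0 \<union> S = G}"
    hence "G0 = (G - S) \<union> (G0 \<inter> S)" "G0 \<inter> S \<in> Pow S" by auto
    thus "G0 \<in> (\<lambda>A. (G - S) \<union> A) ` Pow S" by blast
  qed (use SG GN in auto)
  have inj: "inj_on (\<lambda>A. (G - S) \<union> A) (Pow S)"
    by (rule inj_onI) blast
  have "(\<Sum>G0\<in>{G0\<in>Pow N. G0 \<union> S = G}. p ^ card G0 * (1 - p) ^ card (N - G0))
      = (\<Sum>A\<in>Pow S. p ^ card ((G - S) \<union> A) * (1 - p) ^ card (N - ((G - S) \<union> A)))"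
    unfolding img by (subst sum.reindex[OF inj]) simp
  also have "\<dots> = (\<Sum>A\<in>Pow S. (p ^ card (G - S) * (1 - p) ^ card (N - G)) * (p ^ card A * (1 - p) ^ card (S - A)))"
  proof (rule sum.cong[OF refl])
    fix A assume A: "A \<in> Pow S"
    have fA: "finite A" using A fS finite_subset by auto
    have "card ((G - S) \<union> A) = card (G - S) + card A" using A fG fA by (intro card_Un_disjoint) auto
    moreover have "N - ((G - S) \<union> A) = (N - G) \<union> (S - A)" using A SG GN by auto
    moreover have "card ((N - G) \<union> (S - A)) = card (N - G) + card (S - A)"
      using N fS SG by (intro card_Un_disjoint) auto
    ultimately show "p ^ card ((G - S) \<union> A) * (1 - p) ^ card (N - ((G - S) \<union> A))
        = (p ^ card (G - S) * (1 - p) ^ card (N - G)) * (p ^ card A * (1 - p) ^ card (S - A))"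
      by (simp add: power_add)
  qed
  also have "\<dots> = p ^ card (G - S) * (1 - p) ^ card (N - G)" using sum_binom1[OF fS, of p]
    by (simp add: sum_distrib_left[symmetric])
  also have "card (G - S) = card G - card S" using SG fS by (simp add: card_Diff_subset)
  finally show ?thesis .
qed

lemma pmf_P0:
  assumes "0 < lam" "lam < real n"
  shows "pmf (P0 lam n) G = (if G \<subseteq> pairs n then (lam / n) ^ card G * (1 - lam / n) ^ card (pairs n - G) else 0)"
proof -
  define p where "p = lam / real n"
  have p: "0 < p" "p < 1" using assms by (auto simp: p_def)
  define N where "N = pairs n"
  have fN: "finite N" using finite_pairs N_def by simp
  define M where "M = Pi_pmf N False (\<lambda>_. bernoulli_pmf p)"
  define h where "h = (\<lambda>f. {e \<in> N. f e})"
  have P0eq: "P0 lam n = map_pmf h M" unfolding P0_def M_def h_def N_def p_def ..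
  have sub: "set_pmf M \<subseteq> {f. \<forall>x. x \<notin> N \<longrightarrow> f x = False}" unfolding M_def by (rule set_Pi_pmf_subset[OF fN])
  have "pmf (P0 lam n) G = measure M (h -` {G})" unfolding P0eq pmf_map ..
  also have "\<dots> = measure M (h -` {G} \<inter> set_pmf M)" by (simp add: measure_Int_set_pmf)
  finally have eq1: "pmf (P0 lam n) G = measure M (h -` {G} \<inter> set_pmf M)" .
  show ?thesis
  proof (cases "G \<subseteq> N")
    case True
    define fG where "fG = (\<lambda>e. e \<in> G)"
    have "h -` {G} \<inter> set_pmf M = {fG} \<inter> set_pmf M"
    proof (intro equalityI subsetI)
      fix f assume f: "f \<in> h -` {G} \<inter> set_pmf M"
      hence f1: "\<forall>x. x \<notin> N \<longrightarrow> f x = False" "{e \<in> N. f e} = G" using sub unfolding h_def by auto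
      have "f = fG"
      proof
        fix x show "f x = fG x"
          using f1 True unfolding fG_def by (cases "x \<in> N") auto
      qed
      thus "f \<in> {fG} \<inter> set_pmf M" using f by simp
    next
      fix f assume "f \<in> {fG} \<inter> set_pmf M"
      thus "f \<in> h -` {G} \<inter> set_pmf M" using True unfolding h_def fG_def by auto
    qed
    hence "pmf (P0 lam n) G = measure M {fG}" using eq1 by (simp add: measure_Int_set_pmf)
    also have "\<dots> = pmf M fG" by (rule measure_pmf_single)
    also have "\<dots> = (\<Prod>x\<in>N. pmf (bernoulli_pmf p) (fG x))"
      unfolding M_def using True by (subst pmf_Pi[OF fN]) (auto simp: fG_def)
    also have "\<dots> = (\<Prod>x\<in>N. if x \<in> G then p else 1 - p)"
      using p by (intro prod.cong) (auto simp: fG_def)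
    also have "\<dots> = p ^ card G * (1 - p) ^ card (N - G)"
    proof -
      have "N \<inter> {x. x \<in> G} = G" "N \<inter> - {x. x \<in> G} = N - G" using True by auto
      thus ?thesis by (simp add: prod.If_cases[OF fN])
    qed
    finally show ?thesis using True unfolding p_def N_def by simp
  next
    case False
    have "h -` {G} = {}" using False unfolding h_def by auto
    thus ?thesis using eq1 False unfolding N_def by simp
  qed
qed


lemma card_filter_sum:
  assumes "finite A"
  shows "real (card {x\<in>A. P x}) = (\<Sum>x\<in>A. if P x then 1 else 0)"
  using sum.inter_filter[OF assms, of "\<lambda>_. 1::real" P] by simp

lemma finite_injections: "finite (injections K n)"
proof -
  have "injections K n \<subseteq> {0..<K} \<rightarrow>\<^sub>E {0..<n}" unfolding injections_def by auto
  thus ?thesis by (rule finite_subset) (simp add: finite_PiE)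
qed

lemma tree_edges_eq: "tree_edges D h = (\<lambda>j. {(j - 1) div D, j}) ` {1..<treesize D h}"
  unfolding tree_edges_def by auto

lemma par_less: "1 \<le> (j::nat) \<Longrightarrow> (j - 1) div (D::nat) < j"
proof -
  assume "1 \<le> j"
  moreover have "(j - 1) div D \<le> j - 1" by simp
  ultimately show ?thesis by linarith
qed

lemma imgE_sub:
  assumes "\<sigma> \<in> injections (treesize D h) n"
  shows "imgE \<sigma> (tree_edges D h) \<subseteq> pairs n"
proof
  fix e assume "e \<in> imgE \<sigma> (tree_edges D h)"
  then obtain j where j: "1 \<le> j" "j < treesize D h" "e = \<sigma> ` {(j - 1) div D, j}"
    unfolding imgE_def tree_edges_eq by auto
  have pj: "(j - 1) div D < j" using par_less j(1) .
  have inj: "inj_on \<sigma> {0..<treesize D h}" and fs: "\<sigma> \<in> {0..<treesize D h} \<rightarrow>\<^sub>E {0..<n}"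
    using assms unfolding injections_def by auto
  have "\<sigma> ((j - 1) div D) \<noteq> \<sigma> j" using inj pj j(2) by (metis atLeastLessThan_iff inj_on_eq_iff less_irrefl order.strict_trans zero_le)
  moreover have "\<sigma> ((j - 1) div D) < n" "\<sigma> j < n" using fs pj j(2) by auto
  ultimately show "e \<in> pairs n" unfolding pairs_def j(3) by auto
qed

lemma finite_imgE: "finite (imgE \<sigma> (tree_edges D h))"
  unfolding imgE_def tree_edges_eq by simp

context
  fixes D h :: nat and lam :: real and n :: nat
  assumes lam0: "0 < lam" and lamn: "lam < real n"
    and Ine: "injections (treesize D h) n \<noteq> {}"
begin

abbreviation "T \<equiv> tree_edges D h"
abbreviation "Inj \<equiv> injections (treesize D h) n"
abbreviation "N \<equiv> pairs n"
definition "p = lam / real n"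

lemma p_bounds: "0 < p" "p < 1" using lam0 lamn by (auto simp: p_def)

lemma P0_formula: "G \<subseteq> N \<Longrightarrow> pmf (P0 lam n) G = p ^ card G * (1 - p) ^ card (N - G)"
  using pmf_P0[OF lam0 lamn] unfolding p_def by simp

lemma P0_pos: "G \<subseteq> N \<Longrightarrow> pmf (P0 lam n) G > 0"
  using P0_formula p_bounds by simp

lemma set_P0: "set_pmf (P0 lam n) \<subseteq> Pow N"
  using pmf_P0[OF lam0 lamn] by (auto simp: set_pmf_iff split: if_splits)

lemma pmf_P1:
  assumes GN: "G \<subseteq> N"
  shows "pmf (P1 D h lam n) G =
    (\<Sum>\<sigma>\<in>Inj. if imgE \<sigma> T \<subseteq> G then p ^ (card G - card (imgE \<sigma> T)) * (1 - p) ^ card (N - G) else 0)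
      / card Inj"
proof -
  have fI: "finite Inj" by (rule finite_injections)
  have fN: "finite N" by (rule finite_pairs)
  define F where "F = (\<lambda>G0 \<sigma>. G0 \<union> imgE \<sigma> T)"
  have "pmf (P1 D h lam n) G = (\<integral>G0. pmf (map_pmf (F G0) (pmf_of_set Inj)) G \<partial>measure_pmf (P0 lam n))"
    unfolding P1_def pmf_bind F_def imgE_def ..
  also have "\<dots> = (\<Sum>G0\<in>Pow N. pmf (map_pmf (F G0) (pmf_of_set Inj)) G * pmf (P0 lam n) G0)"
    by (rule integral_measure_pmf_real) (use fN set_P0 in auto)
  also have "\<dots> = (\<Sum>G0\<in>Pow N. (\<Sum>\<sigma>\<in>Inj. if F G0 \<sigma> = G then pmf (P0 lam n) G0 else 0) / card Inj)"
  proof (rule sum.cong[OF refl])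
    fix G0
    have "pmf (map_pmf (F G0) (pmf_of_set Inj)) G = real (card (Inj \<inter> (F G0 -` {G}))) / card Inj"
      unfolding pmf_map using measure_pmf_of_set[OF Ine fI] by simp
    also have "Inj \<inter> (F G0 -` {G}) = {\<sigma>\<in>Inj. F G0 \<sigma> = G}" by auto
    finally have "pmf (map_pmf (F G0) (pmf_of_set Inj)) G = (\<Sum>\<sigma>\<in>Inj. if F G0 \<sigma> = G then 1 else 0) / card Inj"
      using card_filter_sum[OF fI] by simp
    moreover have "(\<Sum>\<sigma>\<in>Inj. if F G0 \<sigma> = G then 1 else 0) * pmf (P0 lam n) G0
       = (\<Sum>\<sigma>\<in>Inj. if F G0 \<sigma> = G then pmf (P0 lam n) G0 else 0)"
      unfolding sum_distrib_right by (intro sum.cong) auto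
    ultimately show "pmf (map_pmf (F G0) (pmf_of_set Inj)) G * pmf (P0 lam n) G0 =
        (\<Sum>\<sigma>\<in>Inj. if F G0 \<sigma> = G then pmf (P0 lam n) G0 else 0) / card Inj"
      by simp
  qed
  also have "\<dots> = (\<Sum>\<sigma>\<in>Inj. \<Sum>G0\<in>Pow N. if F G0 \<sigma> = G then pmf (P0 lam n) G0 else 0) / card Inj"
    by (simp add: sum_divide_distrib[symmetric] sum.swap[of _ "Pow N"])
  also have "\<dots> = (\<Sum>\<sigma>\<in>Inj. if imgE \<sigma> T \<subseteq> G then p ^ (card G - card (imgE \<sigma> T)) * (1 - p) ^ card (N - G) else 0)
      / card Inj"
  proof (intro arg_cong2[where f = "(/)"] sum.cong refl)
    fix \<sigma> assume \<sigma>: "\<sigma> \<in> Inj"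
    have "(\<Sum>G0\<in>Pow N. if F G0 \<sigma> = G then pmf (P0 lam n) G0 else 0)
        = (\<Sum>G0\<in>{G0\<in>Pow N. G0 \<union> imgE \<sigma> T = G}. pmf (P0 lam n) G0)"
      by (subst sum.inter_filter) (auto simp: fN F_def)
    also have "\<dots> = (\<Sum>G0\<in>{G0\<in>Pow N. G0 \<union> imgE \<sigma> T = G}. p ^ card G0 * (1 - p) ^ card (N - G0))"
      by (intro sum.cong refl) (auto simp: P0_formula)
    also have "\<dots> = (if imgE \<sigma> T \<subseteq> G then p ^ (card G - card (imgE \<sigma> T)) * (1 - p) ^ card (N - G) else 0)"
    proof (cases "imgE \<sigma> T \<subseteq> G")
      case True thus ?thesis using sum_unions[OF fN True GN] by simp
    next
      case False
      hence E: "{G0\<in>Pow N. G0 \<union> imgE \<sigma> T = G} = {}" by auto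
      show ?thesis unfolding E using False by simp
    qed
    finally show "(\<Sum>G0\<in>Pow N. if F G0 \<sigma> = G then pmf (P0 lam n) G0 else 0) =
      (if imgE \<sigma> T \<subseteq> G then p ^ (card G - card (imgE \<sigma> T)) * (1 - p) ^ card (N - G) else 0)" .
  qed
  finally show ?thesis .
qed

definition "gg \<sigma> G = (if imgE \<sigma> T \<subseteq> G then 1 / p ^ card (imgE \<sigma> T) else 0)"

lemma LR_formula:
  assumes GN: "G \<subseteq> N"
  shows "LR D h lam n G = (\<Sum>\<sigma>\<in>Inj. gg \<sigma> G) / card Inj"
proof -
  have P0G: "pmf (P0 lam n) G = p ^ card G * (1 - p) ^ card (N - G)" using P0_formula GN .
  have pos: "p ^ card G * (1 - p) ^ card (N - G) > 0" using p_bounds by simp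
  have fG: "finite G" using GN finite_pairs finite_subset by blast
  have "LR D h lam n G = (\<Sum>\<sigma>\<in>Inj. (if imgE \<sigma> T \<subseteq> G then p ^ (card G - card (imgE \<sigma> T)) * (1 - p) ^ card (N - G) else 0)
      / (p ^ card G * (1 - p) ^ card (N - G))) / card Inj"
    unfolding LR_def pmf_P1[OF GN] P0G by (simp add: sum_divide_distrib[symmetric])
  also have "\<dots> = (\<Sum>\<sigma>\<in>Inj. gg \<sigma> G) / card Inj"
  proof (intro arg_cong2[where f = "(/)"] sum.cong refl)
    fix \<sigma>
    show "(if imgE \<sigma> T \<subseteq> G then p ^ (card G - card (imgE \<sigma> T)) * (1 - p) ^ card (N - G) else 0)
      / (p ^ card G * (1 - p) ^ card (N - G)) = gg \<sigma> G"
    proof (cases "imgE \<sigma> T \<subseteq> G")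
      case True
      have le: "card (imgE \<sigma> T) \<le> card G" using True fG by (rule card_mono[rotated])
      have "p ^ card G = p ^ (card G - card (imgE \<sigma> T)) * p ^ card (imgE \<sigma> T)"
        using le by (simp add: power_add[symmetric])
      thus ?thesis using True p_bounds unfolding gg_def by (simp add: field_simps)
    qed (simp add: gg_def)
  qed
  finally show ?thesis .
qed

lemma sum_gg:
  assumes "\<sigma> \<in> Inj" "\<tau> \<in> Inj"
  shows "(\<Sum>G\<in>Pow N. gg \<sigma> G * gg \<tau> G * pmf (P0 lam n) G) = (1 / p) ^ card (imgE \<sigma> T \<inter> imgE \<tau> T)"
proof -
  let ?A = "imgE \<sigma> T" and ?B = "imgE \<tau> T"
  have fN: "finite N" by (rule finite_pairs)
  have U: "?A \<union> ?B \<subseteq> N" using imgE_sub assms by blast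
  have "(\<Sum>G\<in>Pow N. gg \<sigma> G * gg \<tau> G * pmf (P0 lam n) G)
      = (\<Sum>G\<in>Pow N. if ?A \<union> ?B \<subseteq> G then (p ^ card G * (1 - p) ^ card (N - G)) / (p ^ card ?A * p ^ card ?B) else 0)"
    by (intro sum.cong refl) (auto simp: gg_def P0_formula)
  also have "\<dots> = (\<Sum>G\<in>Pow N. (if ?A \<union> ?B \<subseteq> G then p ^ card G * (1 - p) ^ card (N - G) else 0) / (p ^ card ?A * p ^ card ?B))"
    by (intro sum.cong) auto
  also have "\<dots> = (\<Sum>G\<in>Pow N. if ?A \<union> ?B \<subseteq> G then p ^ card G * (1 - p) ^ card (N - G) else 0) / (p ^ card ?A * p ^ card ?B)"
    by (simp add: sum_divide_distrib)
  also have "\<dots> = (\<Sum>G\<in>{G\<in>Pow N. ?A \<union> ?B \<subseteq> G}. p ^ card G * (1 - p) ^ card (N - G)) / (p ^ card ?A * p ^ card ?B)"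
    by (subst sum.inter_filter[OF finite_Pow_iff[THEN iffD2, OF fN], where P = "\<lambda>G. ?A \<union> ?B \<subseteq> G"]) (rule refl)
  also have "\<dots> = p ^ card (?A \<union> ?B) / (p ^ card ?A * p ^ card ?B)"
    using sum_supersets[OF fN U] by simp
  also have "\<dots> = (1 / p) ^ card (?A \<inter> ?B)"
  proof -
    have "card ?A + card ?B = card (?A \<union> ?B) + card (?A \<inter> ?B)"
      by (rule card_Un_Int) (simp_all add: finite_imgE)
    hence "p ^ card ?A * p ^ card ?B = p ^ card (?A \<union> ?B) * p ^ card (?A \<inter> ?B)"
      by (simp add: power_add[symmetric])
    thus ?thesis using p_bounds by (simp add: power_one_over)
  qed
  finally show ?thesis .
qed

lemma second_moment_formula:
  "second_moment D h lam n =
     (\<Sum>\<sigma>\<in>Inj. \<Sum>\<tau>\<in>Inj. (1 / p) ^ card (imgE \<sigma> T \<inter> imgE \<tau> T)) / (real (card Inj))^2"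
proof -
  have fN: "finite N" by (rule finite_pairs)
  have fI: "finite Inj" by (rule finite_injections)
  have "second_moment D h lam n = (\<Sum>G\<in>Pow N. (LR D h lam n G)\<^sup>2 * pmf (P0 lam n) G)"
    unfolding second_moment_def by (rule integral_measure_pmf_real) (use fN set_P0 in auto)
  also have "\<dots> = (\<Sum>G\<in>Pow N. (\<Sum>\<sigma>\<in>Inj. \<Sum>\<tau>\<in>Inj. gg \<sigma> G * gg \<tau> G * pmf (P0 lam n) G) / (real (card Inj))^2)"
  proof (intro sum.cong refl)
    fix G assume "G \<in> Pow N"
    hence "LR D h lam n G = (\<Sum>\<sigma>\<in>Inj. gg \<sigma> G) / card Inj" using LR_formula by simp
    moreover have "(\<Sum>\<sigma>\<in>Inj. gg \<sigma> G) * (\<Sum>\<sigma>\<in>Inj. gg \<sigma> G) * pmf (P0 lam n) G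
        = (\<Sum>\<sigma>\<in>Inj. \<Sum>\<tau>\<in>Inj. gg \<sigma> G * gg \<tau> G * pmf (P0 lam n) G)"
      by (simp add: sum_distrib_left sum_distrib_right mult_ac)
    ultimately show "(LR D h lam n G)\<^sup>2 * pmf (P0 lam n) G = (\<Sum>\<sigma>\<in>Inj. \<Sum>\<tau>\<in>Inj. gg \<sigma> G * gg \<tau> G * pmf (P0 lam n) G) / (real (card Inj))^2"
      by (simp add: power2_eq_square)
  qed
  also have "\<dots> = (\<Sum>\<sigma>\<in>Inj. \<Sum>\<tau>\<in>Inj. \<Sum>G\<in>Pow N. gg \<sigma> G * gg \<tau> G * pmf (P0 lam n) G) / (real (card Inj))^2"
    by (simp add: sum_divide_distrib[symmetric] sum.swap[of _ "Pow N"])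
  also have "\<dots> = (\<Sum>\<sigma>\<in>Inj. \<Sum>\<tau>\<in>Inj. (1 / p) ^ card (imgE \<sigma> T \<inter> imgE \<tau> T)) / (real (card Inj))^2"
    by (intro arg_cong2[where f = "(/)"] sum.cong refl) (simp add: sum_gg)
  finally show ?thesis .
qed

end


definition Wn :: "nat \<Rightarrow> nat \<Rightarrow> nat" where
  "Wn n v = (\<Prod>i\<in>{0..<v}. n - i)"

lemma card_injections: "card (injections K n) = Wn n K"
proof -
  have "injections K n = {f \<in> {0..<K} \<rightarrow>\<^sub>E {0..<n}. inj_on f {0..<K}}"
    unfolding injections_def by auto
  thus ?thesis using card_inj_on_subset_funcset[of "{0..<K}" "{0..<n}" "{0..<K}"]
    unfolding Wn_def by simp
qed

lemma Wn_split:
  assumes "v \<le> K"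
  shows "Wn n K = Wn n v * (\<Prod>i\<in>{0..<K - v}. n - v - i)"
proof -
  have "Wn n K = (\<Prod>i\<in>{0..<v}. n - i) * (\<Prod>i\<in>{v..<K}. n - i)"
    unfolding Wn_def using prod.atLeastLessThan_concat[of 0 v K "\<lambda>i. n - i"] assms by simp
  also have "(\<Prod>i\<in>{v..<K}. n - i) = (\<Prod>i\<in>{0..<K - v}. n - v - i)"
    using prod.shift_bounds_nat_ivl[of "\<lambda>i. n - i" 0 v "K - v"] assms by (simp add: add.commute)
  finally show ?thesis unfolding Wn_def .
qed

lemma Wn_Suc: "Wn n (Suc v) = Wn n v * (n - v)"
  unfolding Wn_def by simp

lemma Wn_pos: "v \<le> n \<Longrightarrow> Wn n v > 0"
  unfolding Wn_def by (auto intro!: prod_pos)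


lemma card_ext:
  assumes U: "U \<subseteq> {0..<K}" and g: "inj_on g U" "g ` U \<subseteq> {0..<n}"
  shows "card {\<sigma> \<in> injections K n. \<forall>u\<in>U. \<sigma> u = g u} = (\<Prod>i\<in>{0..<K - card U}. n - card U - i)"
proof -
  define A where "A = {\<sigma> \<in> injections K n. \<forall>u\<in>U. \<sigma> u = g u}"
  define R where "R = {0..<K} - U"
  define C where "C = {0..<n} - g ` U"
  define Bs where "Bs = {f \<in> R \<rightarrow>\<^sub>E C. inj_on f R}"
  have fU: "finite U" using U finite_subset by blast
  have cardC: "card C = n - card U"
    unfolding C_def using g fU by (simp add: card_Diff_subset card_image)
  have cardR: "card R = K - card U" unfolding R_def using U fU by (simp add: card_Diff_subset)
  have inj: "inj_on (\<lambda>\<sigma>. restrict \<sigma> R) A"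
  proof (rule inj_onI)
    fix s t assume s: "s \<in> A" and t: "t \<in> A" and eq: "restrict s R = restrict t R"
    show "s = t"
    proof
      fix x
      show "s x = t x"
      proof (cases "x \<in> R")
        case True
        have "restrict s R x = restrict t R x" using eq by simp
        thus ?thesis using True by simp
      next
        case False
        show ?thesis
        proof (cases "x \<in> U")
          case True thus ?thesis using s t unfolding A_def by auto
        next
          case False
          hence "x \<notin> {0..<K}" using \<open>x \<notin> R\<close> unfolding R_def by auto
          moreover have "s \<in> {0..<K} \<rightarrow>\<^sub>E {0..<n}" "t \<in> {0..<K} \<rightarrow>\<^sub>E {0..<n}"
            using s t unfolding A_def injections_def by auto
          ultimately show ?thesis using PiE_arb by metis
        qed
      qed
    qed
  qed
  have img: "(\<lambda>\<sigma>. restrict \<sigma> R) ` A = Bs"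
  proof (intro equalityI subsetI)
    fix f assume "f \<in> (\<lambda>\<sigma>. restrict \<sigma> R) ` A"
    then obtain s where s: "s \<in> A" "f = restrict s R" by blast
    have sK: "s \<in> {0..<K} \<rightarrow>\<^sub>E {0..<n}" "inj_on s {0..<K}" "\<forall>u\<in>U. s u = g u"
      using s unfolding A_def injections_def by auto
    have "s x \<in> C" if "x \<in> R" for x
    proof -
      have xK: "x \<in> {0..<K}" "x \<notin> U" using that unfolding R_def by auto
      have "s x \<notin> g ` U"
      proof
        assume "s x \<in> g ` U"
        then obtain u where u: "u \<in> U" "s x = g u" by blast
        hence "s x = s u" using sK by simp
        moreover have "u \<in> {0..<K}" using u(1) U by blast
        ultimately have "x = u" using inj_onD[OF sK(2)] xK(1) by blast
        thus False using xK u by simp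
      qed
      thus ?thesis using sK(1) xK unfolding C_def by auto
    qed
    moreover have "inj_on s R" using sK(2) unfolding R_def by (rule inj_on_subset) auto
    ultimately show "f \<in> Bs" unfolding Bs_def s(2) by (auto simp: inj_on_def)
  next
    fix f assume f: "f \<in> Bs"
    define s where "s = (\<lambda>x. if x \<in> U then g x else f x)"
    have fR: "f \<in> R \<rightarrow>\<^sub>E C" "inj_on f R" using f unfolding Bs_def by auto
    have "s \<in> {0..<K} \<rightarrow>\<^sub>E {0..<n}"
    proof -
      have "s x \<in> {0..<n}" if "x \<in> {0..<K}" for x
      proof (cases "x \<in> U")
        case True thus ?thesis using g(2) unfolding s_def by auto
      next
        case False
        hence "x \<in> R" using that unfolding R_def by simp
        hence "f x \<in> C" using fR(1) by (rule PiE_mem[rotated])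
        thus ?thesis using False unfolding s_def C_def by simp
      qed
      moreover have "s x = undefined" if "x \<notin> {0..<K}" for x
      proof -
        have "x \<notin> U" using that U by auto
        moreover have "x \<notin> R" using that unfolding R_def by auto
        ultimately show ?thesis unfolding s_def using PiE_arb[OF fR(1)] by simp
      qed
      ultimately show ?thesis by (auto simp: PiE_iff extensional_def)
    qed
    moreover have "inj_on s {0..<K}"
    proof (rule inj_onI)
      fix x y assume x: "x \<in> {0..<K}" and y: "y \<in> {0..<K}" and e: "s x = s y"
      show "x = y"
      proof (cases "x \<in> U"; cases "y \<in> U")
        assume "x \<in> U" "y \<in> U"
        hence "g x = g y" using e unfolding s_def by simp
        thus ?thesis using inj_onD[OF g(1)] \<open>x \<in> U\<close> \<open>y \<in> U\<close> by blast
      next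
        assume "x \<in> U" "y \<notin> U"
        have yR: "y \<in> R" using y \<open>y \<notin> U\<close> unfolding R_def by simp
        have "f y \<in> C" by (rule PiE_mem[OF fR(1) yR])
        moreover have "s y = f y" "s x = g x" using \<open>y \<notin> U\<close> \<open>x \<in> U\<close> unfolding s_def by simp_all
        ultimately show ?thesis using e \<open>x \<in> U\<close> unfolding C_def by (metis DiffD2 image_eqI)
      next
        assume "x \<notin> U" "y \<in> U"
        have xR: "x \<in> R" using x \<open>x \<notin> U\<close> unfolding R_def by simp
        have "f x \<in> C" by (rule PiE_mem[OF fR(1) xR])
        moreover have "s x = f x" "s y = g y" using \<open>x \<notin> U\<close> \<open>y \<in> U\<close> unfolding s_def by simp_all
        ultimately show ?thesis using e \<open>y \<in> U\<close> unfolding C_def by (metis DiffD2 image_eqI)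
      next
        assume "x \<notin> U" "y \<notin> U"
        moreover have "x \<in> R" "y \<in> R" using x y \<open>x \<notin> U\<close> \<open>y \<notin> U\<close> unfolding R_def by simp_all
        moreover have "f x = f y" using e \<open>x \<notin> U\<close> \<open>y \<notin> U\<close> unfolding s_def by simp
        ultimately show ?thesis using fR(2) by (metis inj_onD)
      qed
    qed
    moreover have "\<forall>u\<in>U. s u = g u" unfolding s_def by simp
    ultimately have "s \<in> A" unfolding A_def injections_def by simp
    moreover have "restrict s R = f"
    proof
      fix x show "restrict s R x = f x"
      proof (cases "x \<in> R")
        case True hence "x \<notin> U" unfolding R_def by simp
        thus ?thesis using True unfolding s_def by simp
      next
        case False thus ?thesis using PiE_arb[OF fR(1) False] by simp
      qed
    qed
    ultimately show "f \<in> (\<lambda>\<sigma>. restrict \<sigma> R) ` A" by blast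
  qed
  have "card A = card Bs" using card_image[OF inj] img by simp
  also have "card Bs = (\<Prod>i\<in>{0..<card R}. card C - i)"
    unfolding Bs_def using card_inj_on_subset_funcset[of R C R] unfolding R_def C_def by simp
  finally show ?thesis unfolding A_def cardR cardC by simp
qed



definition Emb :: "nat \<Rightarrow> nat \<Rightarrow> nat set set \<Rightarrow> (nat \<Rightarrow> nat) set" where
  "Emb D h B = {\<phi> \<in> (\<Union>B) \<rightarrow>\<^sub>E {0..<treesize D h}. inj_on \<phi> (\<Union>B) \<and> (\<forall>e\<in>B. \<phi> ` e \<in> tree_edges D h)}"

definition nb :: "nat \<Rightarrow> nat \<Rightarrow> nat \<Rightarrow> nat set" where
  "nb D h a = {b. {a, b} \<in> tree_edges D h}"

lemma T_sub: assumes "e \<in> tree_edges D h" shows "e \<subseteq> {0..<treesize D h}"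
proof -
  obtain j where j: "1 \<le> j" "j < treesize D h" "e = {(j - 1) div D, j}"
    using assms unfolding tree_edges_eq by auto
  have "(j - 1) div D < j" using par_less j(1) .
  thus ?thesis using j by auto
qed

lemma fin_T: "finite (tree_edges D h)"
  unfolding tree_edges_eq by simp

lemma nb_sub: "nb D h a \<subseteq> {0..<treesize D h}"
proof
  fix b assume "b \<in> nb D h a"
  hence "{a, b} \<in> tree_edges D h" unfolding nb_def by simp
  hence "{a, b} \<subseteq> {0..<treesize D h}" by (rule T_sub)
  thus "b \<in> {0..<treesize D h}" by simp
qed

lemma nb_fin: "finite (nb D h a)"
  by (rule finite_subset[OF nb_sub]) simp

lemma nb_card: assumes Dp: "D > 0" shows "card (nb D h a) \<le> D + 1"
proof -
  have "nb D h a \<subseteq> insert ((a - 1) div D) {a * D + 1..a * D + D}"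
  proof
    fix b assume "b \<in> nb D h a"
    then obtain i where i: "1 \<le> i" "i < treesize D h" "{a, b} = {(i - 1) div D, i}"
      unfolding nb_def tree_edges_eq by auto
    from i(3) consider "a = (i - 1) div D" "b = i" | "a = i" "b = (i - 1) div D"
      by (auto simp: doubleton_eq_iff)
    thus "b \<in> insert ((a - 1) div D) {a * D + 1..a * D + D}"
    proof cases
      case 1
      have e: "(i - 1) div D * D + (i - 1) mod D = i - 1" by (rule div_mult_mod_eq)
      have m: "(i - 1) mod D < D" using Dp by simp
      have f1: "(i - 1) div D * D \<le> i - 1" and f2: "i - 1 < (i - 1) div D * D + D" using e m by linarith+
      have ab: "a * D = (i - 1) div D * D" "b = i" using 1 by simp_all
      have "a * D + 1 \<le> b" using ab f1 i(1) by linarith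
      moreover have "b \<le> a * D + D" using ab f2 by linarith
      ultimately show ?thesis by simp
    next
      case 2 thus ?thesis by simp
    qed
  qed
  hence "card (nb D h a) \<le> card (insert ((a - 1) div D) {a * D + 1..a * D + D})"
    by (intro card_mono) auto
  also have "\<dots> \<le> Suc (card {a * D + 1..a * D + D})" by (rule card_insert_le_m1) auto
  finally show ?thesis by simp
qed


lemma Union_fin: "B \<subseteq> tree_edges D h \<Longrightarrow> finite (\<Union>B)"
proof -
  assume B: "B \<subseteq> tree_edges D h"
  have "\<Union>B \<subseteq> {0..<treesize D h}" using B T_sub by blast
  thus ?thesis by (rule finite_subset) simp
qed

lemma Union_sub: "B \<subseteq> tree_edges D h \<Longrightarrow> \<Union>B \<subseteq> {0..<treesize D h}"
  using T_sub by blast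

lemma Emb_fin: "finite (Emb D h B)" if "B \<subseteq> tree_edges D h"
proof -
  have "Emb D h B \<subseteq> (\<Union>B) \<rightarrow>\<^sub>E {0..<treesize D h}" unfolding Emb_def by auto
  moreover have "finite ((\<Union>B) \<rightarrow>\<^sub>E {0..<treesize D h})"
    using Union_fin[OF that] by (intro finite_PiE) auto
  ultimately show ?thesis by (rule finite_subset)
qed

lemma Emb_empty: "card (Emb D h {}) = 1"
proof -
  have "Emb D h {} = {\<lambda>x. undefined}" unfolding Emb_def by simp
  thus ?thesis by simp
qed

lemma Emb_D:
  assumes "\<phi> \<in> Emb D h B"
  shows "\<phi> \<in> (\<Union>B) \<rightarrow>\<^sub>E {0..<treesize D h}" "inj_on \<phi> (\<Union>B)" "\<And>e. e \<in> B \<Longrightarrow> \<phi> ` e \<in> tree_edges D h"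
  using assms unfolding Emb_def by auto

lemma Emb_restrict:
  assumes "\<phi> \<in> Emb D h (insert e B0)"
  shows "restrict \<phi> (\<Union>B0) \<in> Emb D h B0"
proof -
  note d = Emb_D[OF assms]
  have "\<Union>B0 \<subseteq> \<Union>(insert e B0)" by auto
  hence "\<forall>x\<in>\<Union>B0. \<phi> x \<in> {0..<treesize D h}" using d(1) by blast
  hence r1: "restrict \<phi> (\<Union>B0) \<in> (\<Union>B0) \<rightarrow>\<^sub>E {0..<treesize D h}" unfolding restrict_PiE_iff .
  have "inj_on \<phi> (\<Union>B0)" using d(2) by (rule inj_on_subset) auto
  hence r2: "inj_on (restrict \<phi> (\<Union>B0)) (\<Union>B0)" by (subst inj_on_cong[where g = \<phi>]) auto
  have r3: "restrict \<phi> (\<Union>B0) ` e' \<in> tree_edges D h" if "e' \<in> B0" for e'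
  proof -
    have "restrict \<phi> (\<Union>B0) ` e' = \<phi> ` e'" using that by auto
    thus ?thesis using d(3)[of e'] that by simp
  qed
  show ?thesis unfolding Emb_def using r1 r2 r3 by blast
qed

lemma Emb_ext1:
  assumes j: "j \<notin> \<Union>B0" and a: "a \<in> \<Union>B0" and B0: "B0 \<subseteq> tree_edges D h" and Dp: "D > 0"
  shows "card (Emb D h (insert {a, j} B0)) \<le> card (Emb D h B0) * (D + 1)"
proof -
  let ?B = "insert {a, j} B0"
  define V0 where "V0 = \<Union>B0"
  define R where "R = (\<lambda>\<phi>::nat\<Rightarrow>nat. (restrict \<phi> V0, \<phi> j))"
  have V: "\<Union>?B = insert j V0" using a unfolding V0_def by auto
  have maps: "R ` Emb D h ?B \<subseteq> Sigma (Emb D h B0) (\<lambda>\<psi>. nb D h (\<psi> a))"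
  proof
    fix y assume "y \<in> R ` Emb D h ?B"
    then obtain \<phi> where \<phi>: "\<phi> \<in> Emb D h ?B" "y = R \<phi>" by blast
    have r: "restrict \<phi> V0 \<in> Emb D h B0" using Emb_restrict[OF \<phi>(1)] unfolding V0_def .
    have "\<phi> ` {a, j} \<in> tree_edges D h" using Emb_D(3)[OF \<phi>(1), of "{a, j}"] by simp
    hence "\<phi> j \<in> nb D h (\<phi> a)" unfolding nb_def by simp
    moreover have "restrict \<phi> V0 a = \<phi> a" using a unfolding V0_def by simp
    ultimately show "y \<in> Sigma (Emb D h B0) (\<lambda>\<psi>. nb D h (\<psi> a))" using r \<phi>(2) unfolding R_def by simp
  qed
  have inj: "inj_on R (Emb D h ?B)"
  proof (rule inj_onI)
    fix \<phi>1 \<phi>2 assume p1: "\<phi>1 \<in> Emb D h ?B" and p2: "\<phi>2 \<in> Emb D h ?B" and eq: "R \<phi>1 = R \<phi>2"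
    have e1: "restrict \<phi>1 V0 = restrict \<phi>2 V0" "\<phi>1 j = \<phi>2 j" using eq unfolding R_def by simp_all
    show "\<phi>1 = \<phi>2"
    proof
      fix x
      show "\<phi>1 x = \<phi>2 x"
      proof (cases "x \<in> V0")
        case True
        have "restrict \<phi>1 V0 x = restrict \<phi>2 V0 x" using e1(1) by simp
        thus ?thesis using True by simp
      next
        case False
        show ?thesis
        proof (cases "x = j")
          case True thus ?thesis using e1(2) by simp
        next
          case False
          hence "x \<notin> \<Union>?B" using \<open>x \<notin> V0\<close> V by simp
          thus ?thesis using PiE_arb[OF Emb_D(1)[OF p1]] PiE_arb[OF Emb_D(1)[OF p2]] by simp
        qed
      qed
    qed
  qed
  have fin0: "finite (Emb D h B0)" using Emb_fin[OF B0] .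
  have "card (Emb D h ?B) = card (R ` Emb D h ?B)" using card_image[OF inj] by simp
  also have "\<dots> \<le> card (Sigma (Emb D h B0) (\<lambda>\<psi>. nb D h (\<psi> a)))"
    by (rule card_mono[OF _ maps]) (use fin0 nb_fin in auto)
  also have "\<dots> = (\<Sum>\<psi>\<in>Emb D h B0. card (nb D h (\<psi> a)))"
    using fin0 nb_fin by simp
  also have "\<dots> \<le> (\<Sum>\<psi>\<in>Emb D h B0. D + 1)"
    by (rule sum_mono) (rule nb_card[OF Dp])
  also have "\<dots> = card (Emb D h B0) * (D + 1)" by simp
  finally show ?thesis .
qed

lemma Emb_ext2:
  assumes j: "j \<notin> \<Union>B0" and a: "a \<notin> \<Union>B0" and B0: "B0 \<subseteq> tree_edges D h" and Dp: "D > 0"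
    and e: "{a, j} \<in> tree_edges D h"
  shows "card (Emb D h (insert {a, j} B0)) \<le> card (Emb D h B0) * (treesize D h * (D + 1))"
proof -
  let ?B = "insert {a, j} B0"
  let ?K = "treesize D h"
  define V0 where "V0 = \<Union>B0"
  define R where "R = (\<lambda>\<phi>::nat\<Rightarrow>nat. (restrict \<phi> V0, (\<phi> a, \<phi> j)))"
  have V: "\<Union>?B = insert a (insert j V0)" unfolding V0_def by auto
  have maps: "R ` Emb D h ?B \<subseteq> Emb D h B0 \<times> Sigma {0..<?K} (nb D h)"
  proof
    fix y assume "y \<in> R ` Emb D h ?B"
    then obtain \<phi> where \<phi>: "\<phi> \<in> Emb D h ?B" "y = R \<phi>" by blast
    have r: "restrict \<phi> V0 \<in> Emb D h B0" using Emb_restrict[OF \<phi>(1)] unfolding V0_def .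
    have "\<phi> ` {a, j} \<in> tree_edges D h" using Emb_D(3)[OF \<phi>(1), of "{a, j}"] by simp
    hence "\<phi> j \<in> nb D h (\<phi> a)" unfolding nb_def by simp
    moreover have "\<phi> a \<in> {0..<?K}" by (rule PiE_mem[OF Emb_D(1)[OF \<phi>(1)]]) (simp add: V)
    ultimately show "y \<in> Emb D h B0 \<times> Sigma {0..<?K} (nb D h)" using r \<phi>(2) unfolding R_def by simp
  qed
  have inj: "inj_on R (Emb D h ?B)"
  proof (rule inj_onI)
    fix \<phi>1 \<phi>2 assume p1: "\<phi>1 \<in> Emb D h ?B" and p2: "\<phi>2 \<in> Emb D h ?B" and eq: "R \<phi>1 = R \<phi>2"
    have e1: "restrict \<phi>1 V0 = restrict \<phi>2 V0" "\<phi>1 j = \<phi>2 j" "\<phi>1 a = \<phi>2 a" using eq unfolding R_def by simp_all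
    show "\<phi>1 = \<phi>2"
    proof
      fix x
      show "\<phi>1 x = \<phi>2 x"
      proof (cases "x \<in> V0")
        case True
        have "restrict \<phi>1 V0 x = restrict \<phi>2 V0 x" using e1(1) by simp
        thus ?thesis using True by simp
      next
        case False
        show ?thesis
        proof (cases "x = j \<or> x = a")
          case True thus ?thesis using e1(2,3) by auto
        next
          case False
          hence "x \<notin> \<Union>?B" using \<open>x \<notin> V0\<close> V by simp
          thus ?thesis using PiE_arb[OF Emb_D(1)[OF p1]] PiE_arb[OF Emb_D(1)[OF p2]] by simp
        qed
      qed
    qed
  qed
  have fin0: "finite (Emb D h B0)" using Emb_fin[OF B0] .
  have finS: "finite (Sigma {0..<?K} (nb D h))" using nb_fin by simp
  have "card (Emb D h ?B) = card (R ` Emb D h ?B)" using card_image[OF inj] by simp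
  also have "\<dots> \<le> card (Emb D h B0 \<times> Sigma {0..<?K} (nb D h))"
    by (rule card_mono[OF _ maps]) (use fin0 finS in auto)
  also have "\<dots> = card (Emb D h B0) * card (Sigma {0..<?K} (nb D h))" by (rule card_cartesian_product)
  also have "card (Sigma {0..<?K} (nb D h)) = (\<Sum>b\<in>{0..<?K}. card (nb D h b))"
    using nb_fin by simp
  also have "\<dots> \<le> (\<Sum>b\<in>{0..<?K}. D + 1)"
    by (rule sum_mono) (rule nb_card[OF Dp])
  also have "\<dots> = ?K * (D + 1)" by simp
  finally show ?thesis by simp
qed

lemma decomp:
  assumes B: "B \<subseteq> tree_edges D h" "B \<noteq> {}"
  obtains a j B0 where "B = insert {a, j} B0" "{a, j} \<notin> B0" "B0 \<subseteq> tree_edges D h"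
    "{a, j} \<in> tree_edges D h" "j \<notin> \<Union>B0" "a \<noteq> j"
proof -
  let ?K = "treesize D h"
  define J where "J = {i \<in> {1..<?K}. {(i - 1) div D, i} \<in> B}"
  have finJ: "finite J" unfolding J_def by simp
  obtain e where "e \<in> B" using B by blast
  hence "e \<in> (\<lambda>j. {(j - 1) div D, j}) ` {1..<?K}" using B(1) unfolding tree_edges_eq by blast
  then obtain i0 where "i0 \<in> {1..<?K}" "e = {(i0 - 1) div D, i0}" by blast
  hence "i0 \<in> J" using \<open>e \<in> B\<close> unfolding J_def by simp
  hence Jne: "J \<noteq> {}" by blast
  define j where "j = Max J"
  have jJ: "j \<in> J" unfolding j_def using finJ Jne by (rule Max_in)
  have jmax: "\<And>i. i \<in> J \<Longrightarrow> i \<le> j" unfolding j_def using finJ by simp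
  define a where "a = (j - 1) div D"
  define B0 where "B0 = B - {{a, j}}"
  have j1: "1 \<le> j" using jJ unfolding J_def by simp
  have aj: "a < j" unfolding a_def using par_less[OF j1] .
  have inB: "{a, j} \<in> B" using jJ unfolding J_def a_def by simp
  have "B = insert {a, j} B0" using inB unfolding B0_def by auto
  moreover have "{a, j} \<notin> B0" unfolding B0_def by simp
  moreover have "B0 \<subseteq> tree_edges D h" using B unfolding B0_def by auto
  moreover have "{a, j} \<in> tree_edges D h" using inB B by auto
  moreover have "j \<notin> \<Union>B0"
  proof
    assume "j \<in> \<Union>B0"
    then obtain e where e: "e \<in> B0" "j \<in> e" by blast
    hence "e \<in> tree_edges D h" "e \<in> B" "e \<noteq> {a, j}" using B unfolding B0_def by auto
    hence "e \<in> (\<lambda>j. {(j - 1) div D, j}) ` {1..<?K}" unfolding tree_edges_eq by simp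
    then obtain i where i: "i \<in> {1..<?K}" "e = {(i - 1) div D, i}" by blast
    have "i \<in> J" using i \<open>e \<in> B\<close> unfolding J_def by simp
    hence "i \<le> j" by (rule jmax)
    moreover have "i \<noteq> j" using i \<open>e \<noteq> {a, j}\<close> unfolding a_def by auto
    moreover have "(i - 1) div D < i" using i(1) par_less by simp
    ultimately show False using e(2) i(2) by auto
  qed
  moreover have "a \<noteq> j" using aj by simp
  ultimately show ?thesis using that by blast
qed


lemma arith_step:
  fixes x E E0 c W0 d :: real
  assumes "0 \<le> x" "0 < W0" "0 < d" "E \<le> E0 * c"
  shows "x ^ Suc m * E / (W0 * d) \<le> (x ^ m * E0 / W0) * (x * c / d)"
proof -
  have "x ^ Suc m * E \<le> x ^ Suc m * (E0 * c)" using assms by (intro mult_left_mono) auto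
  hence "x ^ Suc m * E / (W0 * d) \<le> x ^ Suc m * (E0 * c) / (W0 * d)"
    using assms by (intro divide_right_mono) auto
  also have "\<dots> = (x ^ m * E0 / W0) * (x * c / d)" using assms by (simp add: field_simps)
  finally show ?thesis .
qed

lemma Wn_real_Suc: "v < n \<Longrightarrow> real (Wn n (Suc v)) = real (Wn n v) * (real n - real v)"
  by (simp add: Wn_Suc of_nat_diff)

context
  fixes D h n :: nat and x :: real
  assumes Dp: "D > 0" and Kn: "2 * treesize D h \<le> n" and K1: "1 \<le> treesize D h" and x0: "0 \<le> x"
begin

definition "tm B = x ^ card B * real (card (Emb D h B)) / real (Wn n (card (\<Union>B)))"
definition "alpha = x * (real D + 1) / (real n - real (treesize D h))"
definition "beta = real (treesize D h) / (real n - real (treesize D h))"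

lemma nK: "real n - real (treesize D h) > 0" using Kn K1 by linarith

lemma alpha_nonneg: "alpha \<ge> 0" unfolding alpha_def using nK x0 by simp
lemma beta_nonneg: "beta \<ge> 0" unfolding beta_def using nK by simp
lemma beta_le1: "beta \<le> 1" unfolding beta_def using nK Kn by (simp add: divide_le_eq_1)

lemma tm_nonneg: "tm B \<ge> 0" unfolding tm_def using x0 by simp

lemma tm_bound_aux:
  "\<forall>B. B \<subseteq> tree_edges D h \<longrightarrow> card B = m \<longrightarrow> tm B \<le> (if B = {} then 1 else beta * alpha ^ card B)"
proof (induction m)
  case 0
  show ?case
  proof (intro allI impI)
    fix B assume B: "B \<subseteq> tree_edges D h" "card B = 0"
    have "finite B" using B(1) fin_T finite_subset by blast
    hence "B = {}" using B(2) by simp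
    thus "tm B \<le> (if B = {} then 1 else beta * alpha ^ card B)"
      unfolding tm_def using Emb_empty by (simp add: Wn_def)
  qed
next
  case (Suc m)
  show ?case
  proof (intro allI impI)
    fix B assume B: "B \<subseteq> tree_edges D h" "card B = Suc m"
    have finB: "finite B" using B(1) fin_T finite_subset by blast
    hence Bne: "B \<noteq> {}" using B(2) by auto
    obtain a j B0 where d: "B = insert {a, j} B0" "{a, j} \<notin> B0" "B0 \<subseteq> tree_edges D h"
      "{a, j} \<in> tree_edges D h" "j \<notin> \<Union>B0" "a \<noteq> j"
      using decomp[OF B(1) Bne] by blast
    have finB0: "finite B0" using d(3) fin_T finite_subset by blast
    have cB0: "card B0 = m" using B(2) d(1,2) finB0 by simp
    have IH: "tm B0 \<le> (if B0 = {} then 1 else beta * alpha ^ card B0)" using Suc.IH d(3) cB0 by blast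
    define V0 where "V0 = \<Union>B0"
    define v0 where "v0 = card V0"
    have finV0: "finite V0" unfolding V0_def using Union_fin[OF d(3)] .
    have VB: "\<Union>B = insert a (insert j V0)" unfolding V0_def d(1) by auto
    have VK: "card (\<Union>B) \<le> treesize D h"
      using Union_sub[OF B(1)] by (metis card_atLeastLessThan card_mono diff_zero finite_atLeastLessThan)
    have "tm B = x ^ Suc m * real (card (Emb D h B)) / real (Wn n (card (\<Union>B)))"
      unfolding tm_def using B(2) by simp
    note tmB = this
    have tmB0: "tm B0 = x ^ m * real (card (Emb D h B0)) / real (Wn n v0)"
      unfolding tm_def v0_def V0_def cB0 ..
    have W0pos: "real (Wn n v0) > 0"
    proof -
      have "v0 \<le> card (\<Union>B)" unfolding v0_def VB using finV0 by (intro card_mono) auto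
      hence "v0 \<le> n" using VK Kn by linarith
      thus ?thesis using Wn_pos by simp
    qed
    show "tm B \<le> (if B = {} then 1 else beta * alpha ^ card B)"
    proof (cases "a \<in> V0")
      case True
      have cV: "card (\<Union>B) = Suc v0" unfolding VB v0_def using True d(5) finV0 V0_def
        by (simp add: insert_absorb)
      have v0K: "v0 < treesize D h" using cV VK by simp
      have v0n: "v0 < n" using v0K Kn by linarith
      have "card (Emb D h B) \<le> card (Emb D h B0) * (D + 1)"
        using Emb_ext1[OF d(5) True[unfolded V0_def] d(3) Dp] unfolding d(1) .
      hence "real (card (Emb D h B)) \<le> real (card (Emb D h B0) * (D + 1))" by (simp only: of_nat_le_iff)
      hence emb: "real (card (Emb D h B)) \<le> real (card (Emb D h B0)) * (real D + 1)" by (simp add: algebra_simps)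
      have dpos: "real n - real v0 > 0" using v0n by simp
      have "tm B = x ^ Suc m * real (card (Emb D h B)) / (real (Wn n v0) * (real n - real v0))"
        unfolding tmB cV Wn_real_Suc[OF v0n] ..
      also have "\<dots> \<le> tm B0 * (x * (real D + 1) / (real n - real v0))"
        unfolding tmB0 by (rule arith_step[OF x0 W0pos dpos emb])
      also have "x * (real D + 1) / (real n - real v0) \<le> alpha"
        unfolding alpha_def using nK v0K x0 by (intro divide_left_mono) auto
      hence "tm B0 * (x * (real D + 1) / (real n - real v0)) \<le> tm B0 * alpha"
        using tm_nonneg by (intro mult_left_mono) auto
      also have "B0 \<noteq> {}" using True unfolding V0_def by auto
      hence "tm B0 * alpha \<le> beta * alpha ^ m * alpha"
        using IH cB0 alpha_nonneg by (intro mult_right_mono) auto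
      also have "\<dots> = beta * alpha ^ card B" using B(2) by simp
      finally show ?thesis using Bne by simp
    next
      case False
      have cV: "card (\<Union>B) = Suc (Suc v0)" unfolding VB v0_def using False d(5,6) finV0 V0_def
        by simp
      have v0K: "Suc v0 < treesize D h" using cV VK by simp
      have v0n: "Suc v0 < n" using v0K Kn by linarith
      have "card (Emb D h B) \<le> card (Emb D h B0) * (treesize D h * (D + 1))"
        using Emb_ext2[OF d(5) False[unfolded V0_def] d(3) Dp d(4)] unfolding d(1) .
      hence "real (card (Emb D h B)) \<le> real (card (Emb D h B0) * (treesize D h * (D + 1)))" by (simp only: of_nat_le_iff)
      hence emb: "real (card (Emb D h B)) \<le> real (card (Emb D h B0)) * (real (treesize D h) * (real D + 1))" by (simp add: algebra_simps)
      have d1: "real n - real v0 > 0" "real n - real (Suc v0) > 0" using v0n by simp_all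
      have dpos: "(real n - real v0) * (real n - real (Suc v0)) > 0" using d1 by simp
      have "tm B = x ^ Suc m * real (card (Emb D h B)) / (real (Wn n v0) * ((real n - real v0) * (real n - real (Suc v0))))"
        using v0n unfolding tmB cV Wn_real_Suc[OF v0n] Wn_real_Suc[OF Suc_lessD[OF v0n]] by (simp add: mult.assoc)
      also have "\<dots> \<le> tm B0 * (x * (real (treesize D h) * (real D + 1)) / ((real n - real v0) * (real n - real (Suc v0))))"
        unfolding tmB0 by (rule arith_step[OF x0 W0pos dpos emb])
      also have "x * (real (treesize D h) * (real D + 1)) / ((real n - real v0) * (real n - real (Suc v0)))
          = (x * (real D + 1) / (real n - real v0)) * (real (treesize D h) / (real n - real (Suc v0)))"
        by (simp add: field_simps)
      also have "\<dots> \<le> alpha * beta"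
      proof (rule mult_mono)
        show "x * (real D + 1) / (real n - real v0) \<le> alpha"
          unfolding alpha_def using nK v0K x0 by (intro divide_left_mono) auto
        show "real (treesize D h) / (real n - real (Suc v0)) \<le> beta"
          unfolding beta_def using nK v0K by (intro divide_left_mono) auto
      qed (use alpha_nonneg x0 d1 in auto)
      hence "tm B0 * ((x * (real D + 1) / (real n - real v0)) * (real (treesize D h) / (real n - real (Suc v0))))
          \<le> tm B0 * (alpha * beta)"
        using tm_nonneg by (intro mult_left_mono) auto
      also have "tm B0 * (alpha * beta) \<le> beta * alpha ^ card B"
      proof (cases "B0 = {}")
        case True
        hence "m = 0" using cB0 by simp
        have "tm B0 \<le> 1" using IH True by simp
        hence "tm B0 * (alpha * beta) \<le> 1 * (alpha * beta)"
          using alpha_nonneg beta_nonneg by (intro mult_right_mono) auto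
        thus ?thesis using B(2) \<open>m = 0\<close> by (simp add: mult.commute)
      next
        case False
        have "tm B0 * (alpha * beta) \<le> (beta * alpha ^ m) * (alpha * beta)"
          using IH False cB0 alpha_nonneg beta_nonneg by (intro mult_right_mono) auto
        also have "\<dots> \<le> (beta * alpha ^ m) * (alpha * 1)"
          using beta_le1 alpha_nonneg beta_nonneg by (intro mult_left_mono) auto
        also have "\<dots> = beta * alpha ^ card B" using B(2) by simp
        finally show ?thesis .
      qed
      finally show ?thesis using Bne by simp
    qed
  qed
qed

lemma tm_bound: "B \<subseteq> tree_edges D h \<Longrightarrow> tm B \<le> (if B = {} then 1 else beta * alpha ^ card B)"
  using tm_bound_aux by blast

lemma sum_tm: "(\<Sum>B\<in>Pow (tree_edges D h). tm B) \<le> 1 + beta * (1 + alpha) ^ card (tree_edges D h)"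
proof -
  have fP: "finite (Pow (tree_edges D h))" using fin_T by simp
  have "(\<Sum>B\<in>Pow (tree_edges D h). tm B) \<le> (\<Sum>B\<in>Pow (tree_edges D h). (if B = {} then 1 else 0) + beta * alpha ^ card B)"
  proof (rule sum_mono)
    fix B assume "B \<in> Pow (tree_edges D h)"
    hence "tm B \<le> (if B = {} then 1 else beta * alpha ^ card B)" using tm_bound by simp
    thus "tm B \<le> (if B = {} then 1 else 0) + beta * alpha ^ card B"
      using beta_nonneg alpha_nonneg by (cases "B = {}") auto
  qed
  also have "\<dots> = (\<Sum>B\<in>Pow (tree_edges D h). if B = {} then 1 else 0) + beta * (\<Sum>B\<in>Pow (tree_edges D h). alpha ^ card B)"
    by (simp add: sum.distrib sum_distrib_left)
  also have "(\<Sum>B\<in>Pow (tree_edges D h). if B = {} then 1 else (0::real)) = 1"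
    using fP by (simp add: sum.delta)
  also have "(\<Sum>B\<in>Pow (tree_edges D h). alpha ^ card B) = (1 + alpha) ^ card (tree_edges D h)"
    by (rule sum_pow_Pow[OF fin_T])
  finally show ?thesis .
qed

end


lemma inj_imgE:
  assumes "inj_on \<sigma> {0..<treesize D h}"
  shows "inj_on (imgE \<sigma>) (Pow (tree_edges D h))" "inj_on (image \<sigma>) (tree_edges D h)"
proof -
  have "inj_on (image \<sigma>) (Pow {0..<treesize D h})" using assms by (rule inj_on_image_Pow)
  moreover have "tree_edges D h \<subseteq> Pow {0..<treesize D h}" using T_sub by blast
  ultimately show i1: "inj_on (image \<sigma>) (tree_edges D h)" by (rule inj_on_subset)
  have "inj_on (image (image \<sigma>)) (Pow (tree_edges D h))" using i1 by (rule inj_on_image_Pow)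
  thus "inj_on (imgE \<sigma>) (Pow (tree_edges D h))" unfolding imgE_def[abs_def] by simp
qed

lemma card_imgE:
  assumes "inj_on \<sigma> {0..<treesize D h}" "B \<subseteq> tree_edges D h"
  shows "card (imgE \<sigma> B) = card B"
  unfolding imgE_def using inj_imgE(2)[OF assms(1)] assms(2) by (intro card_image) (rule inj_on_subset)

lemma pow_expand:
  fixes x :: real
  assumes \<sigma>: "\<sigma> \<in> injections (treesize D h) n"
  shows "(1 + x) ^ card (imgE \<sigma> (tree_edges D h) \<inter> M) =
    (\<Sum>B\<in>Pow (tree_edges D h). if imgE \<sigma> B \<subseteq> M then x ^ card B else 0)"
proof -
  let ?T = "tree_edges D h"
  have inj: "inj_on \<sigma> {0..<treesize D h}" using \<sigma> unfolding injections_def by simp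
  have fin: "finite (imgE \<sigma> ?T \<inter> M)" using finite_imgE by blast
  have img: "Pow (imgE \<sigma> ?T \<inter> M) = imgE \<sigma> ` {B\<in>Pow ?T. imgE \<sigma> B \<subseteq> M}"
  proof (intro equalityI subsetI)
    fix A assume A: "A \<in> Pow (imgE \<sigma> ?T \<inter> M)"
    define B where "B = {e \<in> ?T. \<sigma> ` e \<in> A}"
    have "imgE \<sigma> B = A" using A unfolding B_def imgE_def by auto
    moreover have "B \<in> Pow ?T" unfolding B_def by auto
    ultimately show "A \<in> imgE \<sigma> ` {B\<in>Pow ?T. imgE \<sigma> B \<subseteq> M}" using A by auto
  next
    fix A assume "A \<in> imgE \<sigma> ` {B\<in>Pow ?T. imgE \<sigma> B \<subseteq> M}"
    then obtain B where B: "B \<subseteq> ?T" "imgE \<sigma> B \<subseteq> M" "A = imgE \<sigma> B" by blast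
    have "imgE \<sigma> B \<subseteq> imgE \<sigma> ?T" using B(1) unfolding imgE_def by auto
    thus "A \<in> Pow (imgE \<sigma> ?T \<inter> M)" using B by auto
  qed
  have inj2: "inj_on (imgE \<sigma>) {B\<in>Pow ?T. imgE \<sigma> B \<subseteq> M}"
    using inj_imgE(1)[OF inj] by (rule inj_on_subset) auto
  have "(1 + x) ^ card (imgE \<sigma> ?T \<inter> M) = (\<Sum>A\<in>Pow (imgE \<sigma> ?T \<inter> M). x ^ card A)"
    using sum_pow_Pow[OF fin, of x] by simp
  also have "\<dots> = (\<Sum>B\<in>{B\<in>Pow ?T. imgE \<sigma> B \<subseteq> M}. x ^ card (imgE \<sigma> B))"
    unfolding img by (rule sum.reindex[OF inj2, unfolded comp_def])
  also have "\<dots> = (\<Sum>B\<in>{B\<in>Pow ?T. imgE \<sigma> B \<subseteq> M}. x ^ card B)"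
    by (intro sum.cong refl) (simp add: card_imgE[OF inj])
  also have "\<dots> = (\<Sum>B\<in>Pow ?T. if imgE \<sigma> B \<subseteq> M then x ^ card B else 0)"
    by (rule sum.inter_filter) (simp add: fin_T)
  finally show ?thesis .
qed

lemma exists_emb:
  assumes \<sigma>: "\<sigma> \<in> injections (treesize D h) n" and \<tau>: "\<tau> \<in> injections (treesize D h) n"
    and B: "B \<subseteq> tree_edges D h" and sub: "imgE \<sigma> B \<subseteq> imgE \<tau> (tree_edges D h)"
  shows "\<exists>\<phi>\<in>Emb D h B. \<forall>u\<in>\<Union>B. \<sigma> u = \<tau> (\<phi> u)"
proof -
  let ?K = "treesize D h"
  have isg: "inj_on \<sigma> {0..<?K}" and it: "inj_on \<tau> {0..<?K}"
    using \<sigma> \<tau> unfolding injections_def by auto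
  have UB: "\<Union>B \<subseteq> {0..<?K}" using Union_sub[OF B] .
  define \<phi> where "\<phi> = restrict (\<lambda>u. inv_into {0..<?K} \<tau> (\<sigma> u)) (\<Union>B)"
  have edge: "\<exists>e'\<in>tree_edges D h. \<sigma> ` e = \<tau> ` e'" if "e \<in> B" for e
  proof -
    have "\<sigma> ` e \<in> imgE \<sigma> B" using that unfolding imgE_def by simp
    hence "\<sigma> ` e \<in> (\<lambda>e. \<tau> ` e) ` tree_edges D h" using sub unfolding imgE_def by blast
    thus ?thesis by blast
  qed
  have inrange: "\<sigma> u \<in> \<tau> ` {0..<?K}" if uB: "u \<in> \<Union>B" for u
  proof -
    obtain e where e: "e \<in> B" "u \<in> e" using uB by blast
    obtain e' where e': "e' \<in> tree_edges D h" "\<sigma> ` e = \<tau> ` e'" using edge[OF e(1)] by blast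
    have "\<sigma> u \<in> \<tau> ` e'" using e e'(2) by blast
    moreover have "e' \<subseteq> {0..<?K}" using T_sub[OF e'(1)] .
    ultimately show ?thesis by blast
  qed
  have eq: "\<sigma> u = \<tau> (\<phi> u)" if "u \<in> \<Union>B" for u
    using inrange[OF that] that unfolding \<phi>_def by (simp add: f_inv_into_f)
  have rng: "\<phi> u \<in> {0..<?K}" if "u \<in> \<Union>B" for u
  proof -
    have "inv_into {0..<?K} \<tau> (\<sigma> u) \<in> {0..<?K}" by (rule inv_into_into[OF inrange[OF that]])
    thus ?thesis using that unfolding \<phi>_def by simp
  qed
  have p1: "\<phi> \<in> (\<Union>B) \<rightarrow>\<^sub>E {0..<?K}" unfolding \<phi>_def using rng unfolding \<phi>_def by (simp add: restrict_PiE_iff)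
  have p2: "inj_on \<phi> (\<Union>B)"
  proof (rule inj_onI)
    fix u v assume u: "u \<in> \<Union>B" and v: "v \<in> \<Union>B" and e: "\<phi> u = \<phi> v"
    have "\<sigma> u = \<sigma> v" using eq[OF u] eq[OF v] e by simp
    thus "u = v" using inj_onD[OF isg] u v UB by blast
  qed
  have p3: "\<phi> ` e \<in> tree_edges D h" if eB: "e \<in> B" for e
  proof -
    obtain e' where e': "e' \<in> tree_edges D h" "\<sigma> ` e = \<tau> ` e'" using edge[OF eB] by blast
    have eU: "e \<subseteq> \<Union>B" using eB by blast
    have "\<phi> ` e = (\<lambda>u. inv_into {0..<?K} \<tau> (\<sigma> u)) ` e"
      unfolding \<phi>_def using eU by (intro image_cong) auto
    also have "\<dots> = inv_into {0..<?K} \<tau> ` (\<sigma> ` e)" by (simp add: image_image)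
    also have "\<dots> = inv_into {0..<?K} \<tau> ` \<tau> ` e'" using e'(2) by simp
    also have "\<dots> = e'" using it T_sub[OF e'(1)] by (rule inv_into_image_cancel)
    finally show ?thesis using e'(1) by simp
  qed
  have "\<phi> \<in> Emb D h B" unfolding Emb_def using p1 p2 p3 by blast
  thus ?thesis using eq by blast
qed


lemma triple_swap: "(\<Sum>a\<in>A. \<Sum>b\<in>B. \<Sum>c\<in>C. f a b c) = (\<Sum>c\<in>C. \<Sum>a\<in>A. \<Sum>b\<in>B. f a b c)"
proof -
  have "(\<Sum>a\<in>A. \<Sum>b\<in>B. \<Sum>c\<in>C. f a b c) = (\<Sum>a\<in>A. \<Sum>c\<in>C. \<Sum>b\<in>B. f a b c)"
    by (rule sum.cong[OF refl], rule sum.swap)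
  also have "\<dots> = (\<Sum>c\<in>C. \<Sum>a\<in>A. \<Sum>b\<in>B. f a b c)" by (rule sum.swap)
  finally show ?thesis .
qed

definition cext :: "nat \<Rightarrow> nat \<Rightarrow> nat \<Rightarrow> nat" where
  "cext n K v = (\<Prod>i\<in>{0..<K - v}. n - v - i)"

lemma count_ext:
  assumes \<tau>: "\<tau> \<in> injections (treesize D h) n" and \<phi>: "\<phi> \<in> Emb D h B" and B: "B \<subseteq> tree_edges D h"
  shows "(\<Sum>\<sigma>\<in>injections (treesize D h) n. if \<forall>u\<in>\<Union>B. \<sigma> u = \<tau> (\<phi> u) then 1 else (0::real))
     = real (cext n (treesize D h) (card (\<Union>B)))"
proof -
  let ?K = "treesize D h"
  have it: "inj_on \<tau> {0..<?K}" "\<tau> \<in> {0..<?K} \<rightarrow>\<^sub>E {0..<n}" using \<tau> unfolding injections_def by auto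
  note pd = Emb_D[OF \<phi>]
  have U: "\<Union>B \<subseteq> {0..<?K}" using Union_sub[OF B] .
  have img: "\<phi> ` (\<Union>B) \<subseteq> {0..<?K}" using pd(1) by auto
  have g1: "inj_on (\<lambda>u. \<tau> (\<phi> u)) (\<Union>B)"
  proof (rule inj_onI)
    fix u v assume u: "u \<in> \<Union>B" and v: "v \<in> \<Union>B" and e: "\<tau> (\<phi> u) = \<tau> (\<phi> v)"
    have "\<phi> u \<in> {0..<?K}" "\<phi> v \<in> {0..<?K}" using subsetD[OF img imageI[OF u]] subsetD[OF img imageI[OF v]] by simp_all
    hence "\<phi> u = \<phi> v" using inj_onD[OF it(1) e] by blast
    thus "u = v" using inj_onD[OF pd(2)] u v by blast
  qed
  have g2: "(\<lambda>u. \<tau> (\<phi> u)) ` (\<Union>B) \<subseteq> {0..<n}"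
  proof
    fix y assume "y \<in> (\<lambda>u. \<tau> (\<phi> u)) ` (\<Union>B)"
    then obtain u where u: "u \<in> \<Union>B" "y = \<tau> (\<phi> u)" by blast
    have "\<phi> u \<in> {0..<?K}" using subsetD[OF img imageI[OF u(1)]] .
    thus "y \<in> {0..<n}" using u(2) PiE_mem[OF it(2)] by blast
  qed
  have "(\<Sum>\<sigma>\<in>injections ?K n. if \<forall>u\<in>\<Union>B. \<sigma> u = \<tau> (\<phi> u) then 1 else (0::real))
      = real (card {\<sigma> \<in> injections ?K n. \<forall>u\<in>\<Union>B. \<sigma> u = \<tau> (\<phi> u)})"
    using card_filter_sum[OF finite_injections] by simp
  also have "card {\<sigma> \<in> injections ?K n. \<forall>u\<in>\<Union>B. \<sigma> u = \<tau> (\<phi> u)} = cext n ?K (card (\<Union>B))"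
    unfolding cext_def using card_ext[OF U g1 g2] .
  finally show ?thesis .
qed


lemma SM_bounds:
  fixes D h n :: nat and lam :: real
  assumes Dp: "D > 0" and lam0: "0 < lam" and lamn: "lam < real n"
    and Kn: "2 * treesize D h \<le> n" and K1: "1 \<le> treesize D h"
  shows "1 \<le> second_moment D h lam n"
    "second_moment D h lam n \<le> 1 + beta D h n * (1 + alpha D h n (real n / lam - 1)) ^ card (tree_edges D h)"
proof -
  let ?K = "treesize D h"
  let ?I = "injections ?K n"
  let ?T = "tree_edges D h"
  define x where "x = real n / lam - 1"
  have x0: "0 \<le> x" unfolding x_def using lam0 lamn by (simp add: field_simps)
  have Kle: "?K \<le> n" using Kn by simp
  have cI: "card ?I = Wn n ?K" by (rule card_injections)
  have Ipos: "Wn n ?K > 0" using Wn_pos[OF Kle] .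
  have Ine: "?I \<noteq> {}" using cI Ipos by (metis card.empty less_irrefl)
  have finI: "finite ?I" by (rule finite_injections)
  have pinv: "1 / p lam n = 1 + x" unfolding p_def[OF lam0 lamn Ine] x_def using lam0 lamn by simp
  define S where "S = (\<Sum>\<sigma>\<in>?I. \<Sum>\<tau>\<in>?I. (1 + x) ^ card (imgE \<sigma> ?T \<inter> imgE \<tau> ?T))"
  have SM: "second_moment D h lam n = S / (real (card ?I))\<^sup>2"
    unfolding S_def using second_moment_formula[OF lam0 lamn Ine] pinv by simp
  have Ipos': "real (card ?I) > 0" using cI Ipos by simp
  have "(\<Sum>\<sigma>\<in>?I. \<Sum>\<tau>\<in>?I. (1::real)) \<le> S" unfolding S_def
    by (intro sum_mono) (use x0 in auto)
  hence "(real (card ?I))\<^sup>2 \<le> S" by (simp add: power2_eq_square)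
  thus "1 \<le> second_moment D h lam n" unfolding SM using Ipos' by simp
  define g where "g = (\<lambda>(\<sigma>::nat\<Rightarrow>nat) (\<tau>::nat\<Rightarrow>nat) (B::nat set set) (\<phi>::nat\<Rightarrow>nat). if \<forall>u\<in>\<Union>B. \<sigma> u = \<tau> (\<phi> u) then 1 else (0::real))"
  have S1: "S = (\<Sum>\<sigma>\<in>?I. \<Sum>\<tau>\<in>?I. \<Sum>B\<in>Pow ?T. if imgE \<sigma> B \<subseteq> imgE \<tau> ?T then x ^ card B else 0)"
    unfolding S_def by (intro sum.cong refl pow_expand) auto
  also have "\<dots> \<le> (\<Sum>\<sigma>\<in>?I. \<Sum>\<tau>\<in>?I. \<Sum>B\<in>Pow ?T. x ^ card B * (\<Sum>\<phi>\<in>Emb D h B. g \<sigma> \<tau> B \<phi>))"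
  proof (intro sum_mono)
    fix \<sigma> \<tau> B assume \<sigma>: "\<sigma> \<in> ?I" and \<tau>: "\<tau> \<in> ?I" and B: "B \<in> Pow ?T"
    have gnn: "0 \<le> (\<Sum>\<phi>\<in>Emb D h B. g \<sigma> \<tau> B \<phi>)" unfolding g_def by (intro sum_nonneg) auto
    show "(if imgE \<sigma> B \<subseteq> imgE \<tau> ?T then x ^ card B else 0) \<le> x ^ card B * (\<Sum>\<phi>\<in>Emb D h B. g \<sigma> \<tau> B \<phi>)"
    proof (cases "imgE \<sigma> B \<subseteq> imgE \<tau> ?T")
      case True
      obtain \<phi> where \<phi>: "\<phi> \<in> Emb D h B" "\<forall>u\<in>\<Union>B. \<sigma> u = \<tau> (\<phi> u)"
        using exists_emb[OF \<sigma> \<tau> _ True] B by auto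
      have "g \<sigma> \<tau> B \<phi> \<le> (\<Sum>\<phi>\<in>Emb D h B. g \<sigma> \<tau> B \<phi>)"
        by (rule member_le_sum[OF \<phi>(1)]) (use Emb_fin B in \<open>auto simp: g_def\<close>)
      hence "1 \<le> (\<Sum>\<phi>\<in>Emb D h B. g \<sigma> \<tau> B \<phi>)" using \<phi>(2) unfolding g_def by simp
      hence "x ^ card B * 1 \<le> x ^ card B * (\<Sum>\<phi>\<in>Emb D h B. g \<sigma> \<tau> B \<phi>)"
        using x0 by (intro mult_left_mono) auto
      thus ?thesis using True by simp
    next
      case False thus ?thesis using gnn x0 by simp
    qed
  qed
  also have "\<dots> = (\<Sum>B\<in>Pow ?T. \<Sum>\<sigma>\<in>?I. \<Sum>\<tau>\<in>?I. x ^ card B * (\<Sum>\<phi>\<in>Emb D h B. g \<sigma> \<tau> B \<phi>))"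
    by (rule triple_swap)
  also have "\<dots> = (\<Sum>B\<in>Pow ?T. x ^ card B * (\<Sum>\<sigma>\<in>?I. \<Sum>\<tau>\<in>?I. \<Sum>\<phi>\<in>Emb D h B. g \<sigma> \<tau> B \<phi>))"
    by (simp add: sum_distrib_left)
  also have "\<dots> = (\<Sum>B\<in>Pow ?T. x ^ card B * (\<Sum>\<phi>\<in>Emb D h B. \<Sum>\<tau>\<in>?I. \<Sum>\<sigma>\<in>?I. g \<sigma> \<tau> B \<phi>))"
  proof (rule sum.cong[OF refl])
    fix B assume "B \<in> Pow ?T"
    have "(\<Sum>\<sigma>\<in>?I. \<Sum>\<tau>\<in>?I. \<Sum>\<phi>\<in>Emb D h B. g \<sigma> \<tau> B \<phi>) = (\<Sum>\<phi>\<in>Emb D h B. \<Sum>\<sigma>\<in>?I. \<Sum>\<tau>\<in>?I. g \<sigma> \<tau> B \<phi>)"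
      by (rule triple_swap)
    also have "\<dots> = (\<Sum>\<phi>\<in>Emb D h B. \<Sum>\<tau>\<in>?I. \<Sum>\<sigma>\<in>?I. g \<sigma> \<tau> B \<phi>)"
      by (rule sum.cong[OF refl], rule sum.swap)
    finally show "x ^ card B * (\<Sum>\<sigma>\<in>?I. \<Sum>\<tau>\<in>?I. \<Sum>\<phi>\<in>Emb D h B. g \<sigma> \<tau> B \<phi>) = x ^ card B * (\<Sum>\<phi>\<in>Emb D h B. \<Sum>\<tau>\<in>?I. \<Sum>\<sigma>\<in>?I. g \<sigma> \<tau> B \<phi>)" by simp
  qed
  also have "\<dots> = (\<Sum>B\<in>Pow ?T. x ^ card B * (real (card (Emb D h B)) * (real (card ?I) * real (cext n ?K (card (\<Union>B))))))"
  proof (rule sum.cong[OF refl])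
    fix B assume B: "B \<in> Pow ?T"
    have "(\<Sum>\<phi>\<in>Emb D h B. \<Sum>\<tau>\<in>?I. \<Sum>\<sigma>\<in>?I. g \<sigma> \<tau> B \<phi>) = (\<Sum>\<phi>\<in>Emb D h B. \<Sum>\<tau>\<in>?I. real (cext n ?K (card (\<Union>B))))"
      unfolding g_def using B by (intro sum.cong refl count_ext) auto
    thus "x ^ card B * (\<Sum>\<phi>\<in>Emb D h B. \<Sum>\<tau>\<in>?I. \<Sum>\<sigma>\<in>?I. g \<sigma> \<tau> B \<phi>) = x ^ card B * (real (card (Emb D h B)) * (real (card ?I) * real (cext n ?K (card (\<Union>B)))))"
      by simp
  qed
  finally have Sle: "S \<le> (\<Sum>B\<in>Pow ?T. x ^ card B * (real (card (Emb D h B)) * (real (card ?I) * real (cext n ?K (card (\<Union>B))))))" .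
  have "second_moment D h lam n \<le> (\<Sum>B\<in>Pow ?T. x ^ card B * (real (card (Emb D h B)) * (real (card ?I) * real (cext n ?K (card (\<Union>B)))))) / (real (card ?I))\<^sup>2"
    unfolding SM using Sle Ipos' by (intro divide_right_mono) auto
  also have "\<dots> = (\<Sum>B\<in>Pow ?T. tm D h n x B)"
    unfolding sum_divide_distrib
  proof (intro sum.cong refl)
    fix B assume B: "B \<in> Pow ?T"
    have vK: "card (\<Union>B) \<le> ?K" using Union_sub[of B D h] B
      by (metis PowD card_atLeastLessThan card_mono diff_zero finite_atLeastLessThan)
    have split: "real (card ?I) = real (Wn n (card (\<Union>B))) * real (cext n ?K (card (\<Union>B)))"
      unfolding cI cext_def using Wn_split[OF vK, of n] by simp
    have "real (cext n ?K (card (\<Union>B))) \<noteq> 0"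
    proof
      assume "real (cext n ?K (card (\<Union>B))) = 0"
      hence "real (card ?I) = 0" using split by simp
      thus False using Ipos' by simp
    qed
    hence cpos: "real (cext n ?K (card (\<Union>B))) > 0" by simp
    have "real (Wn n (card (\<Union>B))) \<noteq> 0"
    proof
      assume "real (Wn n (card (\<Union>B))) = 0"
      hence "real (card ?I) = 0" using split by simp
      thus False using Ipos' by simp
    qed
    hence wpos: "real (Wn n (card (\<Union>B))) > 0" by simp
    show "x ^ card B * (real (card (Emb D h B)) * (real (card ?I) * real (cext n ?K (card (\<Union>B))))) / (real (card ?I))\<^sup>2
      = tm D h n x B"
      unfolding tm_def[OF Dp Kn K1 x0] using Ipos' cpos wpos split
      by (simp add: power2_eq_square field_simps)
  qed
  also have "\<dots> \<le> 1 + beta D h n * (1 + alpha D h n x) ^ card ?T"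
    by (rule sum_tm[OF Dp Kn K1 x0])
  finally show "second_moment D h lam n \<le> 1 + beta D h n * (1 + alpha D h n (real n / lam - 1)) ^ card (tree_edges D h)"
    unfolding x_def .
qed


lemma treesize_ge1: assumes "D > 1" shows "1 \<le> treesize D h"
proof -
  have "D ^ 1 \<le> D ^ (h + 1)" using assms by (intro power_increasing) auto
  hence "D ^ 1 - 1 \<le> D ^ (h + 1) - 1" by (rule diff_le_mono)
  hence "D - 1 \<le> D ^ (h + 1) - 1" by simp
  hence "(D - 1) div (D - 1) \<le> (D ^ (h + 1) - 1) div (D - 1)" by (rule div_le_mono)
  thus ?thesis unfolding treesize_def using assms by simp
qed

lemma card_T_le: "card (tree_edges D h) \<le> treesize D h"
proof -
  have "card (tree_edges D h) \<le> card {1..<treesize D h}" unfolding tree_edges_eq by (rule card_image_le) simp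
  thus ?thesis by simp
qed

lemma ev_2ln: "\<forall>\<^sub>F n in sequentially. 2 * ln (real n) \<le> real n" by real_asymp
lemma ev_lam: "\<forall>\<^sub>F n in sequentially. lam < real n" by real_asymp
lemma lim_final: "(\<lambda>n. 1 + 2 * ln (real n) * sqrt (real n) / real n) \<longlonglongrightarrow> 1" by real_asymp

theorem lemma9:
  fixes D :: nat and lam :: real and hs :: "nat \<Rightarrow> nat"
  assumes "D > 1"
    and "0 < lam" and "lam < lambdaD D"
    and "\<forall>\<^sub>F n in sequentially.
           real (hs n) \<le> real (hbar D lam n) - ln (real (hbar D lam n)) / ln (real D)
                          + ln (1 - 1 / real D) / ln (real D)"
  shows "(\<lambda>n. second_moment D (hs n) lam n) \<longlonglongrightarrow> 1"
proof -
  define a0 where "a0 = 2 * (real D + 1) / lam"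
  define c0 where "c0 = ln (1 + a0)"
  have a0pos: "a0 > 0" unfolding a0_def using assms(2) by simp
  have c0pos: "c0 > 0" unfolding c0_def using a0pos by simp
  define eps where "eps = min 1 (1 / (2 * c0))"
  have eps0: "eps > 0" unfolding eps_def using c0pos by simp
  have eps1: "eps \<le> 1" unfolding eps_def by simp
  have epsc: "eps * c0 \<le> 1 / 2"
  proof -
    have "eps \<le> 1 / (2 * c0)" unfolding eps_def by simp
    hence "eps * c0 \<le> 1 / (2 * c0) * c0" using c0pos by (intro mult_right_mono) auto
    thus ?thesis using c0pos by simp
  qed
  have Kev: "\<forall>\<^sub>F n in sequentially. real (treesize D (hs n)) \<le> eps * ln (real n)"
    using K_small[OF assms(1,2,3,4) eps0] .
  have main: "\<forall>\<^sub>F n in sequentially. 1 \<le> second_moment D (hs n) lam n \<and>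
      second_moment D (hs n) lam n \<le> 1 + 2 * ln (real n) * sqrt (real n) / real n"
    using Kev ev_2ln ev_lam[of lam] ln_ev1
  proof eventually_elim
    case (elim n)
    define K where "K = treesize D (hs n)"
    have K1: "1 \<le> K" unfolding K_def using treesize_ge1[OF assms(1)] .
    have lnn: "1 \<le> ln (real n)" using elim(4) .
    have npos: "real n > 0" using elim(3) assms(2) by simp
    have "eps * ln (real n) \<le> 1 * ln (real n)" using eps1 lnn by (intro mult_right_mono) auto
    hence KlnR: "real K \<le> ln (real n)" using elim(1) unfolding K_def by linarith
    have Kn: "2 * K \<le> n"
    proof -
      have "real (2 * K) \<le> real n" using KlnR elim(2) by simp
      thus ?thesis by (simp only: of_nat_le_iff)
    qed
    have Dp: "D > 0" using assms(1) by simp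
    note b = SM_bounds[OF Dp assms(2) elim(3) Kn[unfolded K_def] K1[unfolded K_def]]
    define x where "x = real n / lam - 1"
    have x0: "0 \<le> x" unfolding x_def using assms(2) elim(3) by (simp add: field_simps)
    have nK: "real n - real K \<ge> real n / 2" using Kn by simp
    have nKpos: "real n - real K > 0" using nK npos by simp
    have al: "alpha D (hs n) n x \<le> a0"
    proof -
      have "alpha D (hs n) n x = x * (real D + 1) / (real n - real K)"
        unfolding K_def using alpha_def[OF Dp Kn[unfolded K_def] K1[unfolded K_def] x0] .
      also have "\<dots> \<le> (real n / lam) * (real D + 1) / (real n / 2)"
        using x0 nK npos assms(2) unfolding x_def
        by (intro frac_le mult_right_mono) auto
      also have "\<dots> = a0" unfolding a0_def using npos assms(2) by (simp add: field_simps)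
      finally show ?thesis .
    qed
    have al0: "alpha D (hs n) n x \<ge> 0"
      using alpha_nonneg[OF Dp Kn[unfolded K_def] K1[unfolded K_def] x0] .
    have be: "beta D (hs n) n \<le> 2 * real K / real n"
    proof -
      have "beta D (hs n) n = real K / (real n - real K)"
        unfolding K_def using beta_def[OF Dp Kn[unfolded K_def] K1[unfolded K_def] x0] .
      also have "\<dots> \<le> real K / (real n / 2)" using nK npos by (intro divide_left_mono) auto
      also have "\<dots> = 2 * real K / real n" by simp
      finally show ?thesis .
    qed
    have be0: "beta D (hs n) n \<ge> 0"
      using beta_nonneg[OF Dp Kn[unfolded K_def] K1[unfolded K_def] x0] .
    have pw: "(1 + alpha D (hs n) n x) ^ card (tree_edges D (hs n)) \<le> sqrt (real n)"
    proof -
      have "(1 + alpha D (hs n) n x) ^ card (tree_edges D (hs n)) \<le> (1 + a0) ^ card (tree_edges D (hs n))"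
        using al al0 by (intro power_mono) auto
      also have "\<dots> \<le> (1 + a0) ^ K"
        using a0pos card_T_le[of D "hs n"] unfolding K_def by (intro power_increasing) auto
      also have "\<dots> = exp (real K * c0)"
        unfolding c0_def using a0pos by (simp add: exp_of_nat_mult)
      also have "real K * c0 \<le> eps * ln (real n) * c0"
        using elim(1) c0pos unfolding K_def by (intro mult_right_mono) auto
      also have "\<dots> = (eps * c0) * ln (real n)" by simp
      also have "\<dots> \<le> (1 / 2) * ln (real n)" using epsc lnn by (intro mult_right_mono) auto
      also have "exp ((1 / 2) * ln (real n)) = sqrt (real n)"
        using npos by (simp add: powr_half_sqrt[symmetric] powr_def)
      finally show ?thesis by simp
    qed
    have "second_moment D (hs n) lam n \<le> 1 + beta D (hs n) n * (1 + alpha D (hs n) n x) ^ card (tree_edges D (hs n))"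
      using b(2) unfolding x_def .
    also have "\<dots> \<le> 1 + (2 * real K / real n) * sqrt (real n)"
      using be be0 pw al0 by (intro add_left_mono mult_mono) auto
    also have "\<dots> \<le> 1 + (2 * ln (real n) / real n) * sqrt (real n)"
      using KlnR npos by (intro add_left_mono mult_right_mono divide_right_mono) auto
    finally show ?case using b(1) by simp
  qed
  show ?thesis
  proof (rule tendsto_sandwich[of "\<lambda>_. 1" _ _ "\<lambda>n. 1 + 2 * ln (real n) * sqrt (real n) / real n"])
    show "\<forall>\<^sub>F n in sequentially. 1 \<le> second_moment D (hs n) lam n" using main by (rule eventually_mono) auto
    show "\<forall>\<^sub>F n in sequentially. second_moment D (hs n) lam n \<le> 1 + 2 * ln (real n) * sqrt (real n) / real n"
      using main by (rule eventually_mono) auto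
  qed (auto intro: lim_final)
qed

end
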